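(* There exist 4-GDDs of types $39^8 120^1$, $39^8 123^1$, $39^8 126^1$, $39^8 129^1$ and $39^8 132^1$.
   Context: A 4-GDD of type $g_1^{u_1}\cdots g_r^{u_r}$ is a triple $(V,\mathcal G,\mathcal B)$ where $V$ is a set of $u_1g_1+\cdots+u_rg_r$ points, $\mathcal G$ is a partition of $V$ into $u_i$ groups of size $g_i$ for each $i$, and $\mathcal B$ is a non-empty collection of 4-element subsets (blocks) such that every pair of points from distinct groups lies in exactly one block and no pair from the same group lies in any block. *)

theory Defs
  imports Main "HOL-Library.Multiset"
begin

definition is_4GDD :: "'a set \<Rightarrow> 'a set set \<Rightarrow> 'a set set \<Rightarrow> bool" where
  "is_4GDD V G B \<longleftrightarrow>
     finite V \<and>
     (\<forall>X\<in>G. X \<noteq> {} \<and> X \<subseteq> V) \<and> \<Union>G = V \<and>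
     (\<forall>X\<in>G. \<forall>Y\<in>G. X \<noteq> Y \<longrightarrow> X \<inter> Y = {}) \<and>
     B \<noteq> {} \<and>
     (\<forall>b\<in>B. b \<subseteq> V \<and> card b = 4) \<and>
     (\<forall>X\<in>G. \<forall>Y\<in>G. \<forall>x\<in>X. \<forall>y\<in>Y. X \<noteq> Y \<longrightarrow> (\<exists>!b. b \<in> B \<and> x \<in> b \<and> y \<in> b)) \<and>
     (\<forall>X\<in>G. \<forall>x\<in>X. \<forall>y\<in>X. x \<noteq> y \<longrightarrow> \<not> (\<exists>b\<in>B. x \<in> b \<and> y \<in> b))"

text \<open>The type of a GDD: the multiset of its group sizes. Type g1^u1 ... gr^ur
corresponds to the multiset with u_i copies of g_i.\<close>

definition gdd_type :: "'a set set \<Rightarrow> nat multiset" where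
  "gdd_type G = image_mset card (mset_set G)"

definition has_4GDD_of_type :: "nat multiset \<Rightarrow> bool" where
  "has_4GDD_of_type T \<longleftrightarrow>
     (\<exists>(V :: nat set) G B. is_4GDD V G B \<and> gdd_type G = T)"

end

theory Submission
  imports Defs "HOL-Library.Countable"
begin

lemma ar1a: "0 \<le> (z1::int) \<Longrightarrow> z1 < 39 \<Longrightarrow> (y1 + (z1 - y1) mod 39) mod 39 = z1"
  by (simp add: mod_add_right_eq)
lemma ar1b: "0 \<le> (z2::int) \<Longrightarrow> z2 < 39 \<Longrightarrow> (y2 - y1) mod 39 = (z2 - z1) mod 39 \<Longrightarrow> (y2 + (z1 - y1) mod 39) mod 39 = z2"
proof -
  assume a: "0 \<le> z2" "z2 < 39" "(y2 - y1) mod 39 = (z2 - z1) mod 39"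
  have "(y2 + (z1 - y1) mod 39) mod 39 = (z1 + (y2 - y1)) mod 39" by (simp add: mod_add_right_eq algebra_simps)
  also have "\<dots> = (z1 + (z2 - z1) mod 39) mod 39" using a(3) by (metis mod_add_right_eq)
  also have "\<dots> = z2" using a by (simp add: mod_add_right_eq)
  finally show ?thesis .
qed
lemma ar2: "(y1+t) mod 39 = (z1::int) \<Longrightarrow> (y2+t) mod 39 = z2 \<Longrightarrow> (y2-y1) mod 39 = (z2-z1) mod 39"
proof -
  assume a: "(y1+t) mod 39 = (z1::int)" "(y2+t) mod 39 = z2"
  have "(z2-z1) mod 39 = ((y2+t) mod 39 - (y1+t) mod 39) mod 39" using a by simp
  also have "\<dots> = ((y2+t) - (y1+t)) mod 39" by (rule mod_diff_eq)
  finally show ?thesis by simp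
qed
lemma ar3: "0 \<le> (t::int) \<Longrightarrow> t<39 \<Longrightarrow> 0 \<le> t' \<Longrightarrow> t'<39 \<Longrightarrow> (y+t) mod 39 = (y+t') mod 39 \<Longrightarrow> t = t'"
proof -
  assume a: "0 \<le> t" "t<39" "0 \<le> t'" "t'<39" "(y+t) mod 39 = (y+t') mod 39"
  have "t = ((y+t) - y) mod 39" using a by simp
  also have "\<dots> = ((y+t) mod 39 - y) mod 39" by (simp add: mod_diff_left_eq)
  also have "\<dots> = ((y+t') mod 39 - y) mod 39" using a by simp
  also have "\<dots> = ((y+t') - y) mod 39" by (simp add: mod_diff_left_eq)
  also have "\<dots> = t'" using a by simp
  finally show ?thesis .
qed
lemma ar4: "0 \<le> (y::int) \<Longrightarrow> y<39 \<Longrightarrow> 0 \<le> y' \<Longrightarrow> y'<39 \<Longrightarrow> (y+t) mod 39 = (y'+t) mod 39 \<Longrightarrow> y = y'"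
proof -
  assume a: "0 \<le> y" "y<39" "0 \<le> y'" "y'<39" "(y+t) mod 39 = (y'+t) mod 39"
  have "(t+y) mod 39 = (t+y') mod 39" using a(5) by (simp add: add.commute)
  then show ?thesis using ar3[of y y' t] a by simp
qed
lemma m39_3: "((x::int) mod 39) mod 3 = x mod 3"
  by (simp add: mod_mod_cancel)
lemma ar5: "(y::int) mod 3 = (z - j) mod 3 \<Longrightarrow> ((z - y) mod 39) mod 3 = j mod 3"
proof -
  assume a: "(y::int) mod 3 = (z - j) mod 3"
  have "((z - y) mod 39) mod 3 = (z - y) mod 3" by (rule m39_3)
  also have "\<dots> = (z - y mod 3) mod 3" by (simp add: mod_diff_right_eq)
  also have "\<dots> = (z - (z - j) mod 3) mod 3" using a by simp
  also have "\<dots> = (z - (z - j)) mod 3" by (simp add: mod_diff_right_eq)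
  finally show ?thesis by simp
qed
lemma ar6: "(y+t) mod 39 = (z::int) \<Longrightarrow> t mod 3 = j \<Longrightarrow> y mod 3 = (z - j) mod 3"
proof -
  assume a: "(y+t) mod 39 = (z::int)" "t mod 3 = j"
  have "y mod 3 = ((y + t) - t) mod 3" by simp
  also have "\<dots> = (((y + t) mod 39) mod 3 - t mod 3) mod 3" by (simp add: m39_3 mod_diff_eq)
  also have "\<dots> = (z mod 3 - j) mod 3" using a by simp
  also have "\<dots> = (z - j) mod 3" by (simp add: mod_diff_left_eq)
  finally show ?thesis .
qed

type_synonym fpt = "nat \<times> int"
type_synonym pt = "fpt + (nat \<times> int)"

definition sh :: "int \<Rightarrow> fpt \<Rightarrow> fpt" where "sh t p = (fst p, (snd p + t) mod 39)"

definition blkOf :: "int \<Rightarrow> nat option \<times> fpt set \<Rightarrow> pt set" where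
  "blkOf t i = (case fst i of None \<Rightarrow> Inl ` sh t ` snd i
       | Some c \<Rightarrow> insert (Inr (c, t mod 3)) (Inl ` sh t ` snd i))"

definition Blk :: "(nat option \<times> fpt set) set \<Rightarrow> pt set set" where
  "Blk I = {blkOf t i | t i. 0 \<le> t \<and> t < 39 \<and> i \<in> I}"

definition Vs :: "nat \<Rightarrow> pt set" where
  "Vs nb = Inl ` ({..<8} \<times> {0..<39}) \<union> Inr ` ({..<nb} \<times> {0..<3})"

definition Gs :: "nat \<Rightarrow> pt set set" where
  "Gs nb = insert (Inr ` ({..<nb} \<times> {0..<3})) ((\<lambda>g. Inl ` ({g} \<times> {0..<39})) ` {..<8})"

lemma Inl_in_sh: "(g, z) \<in> sh t ` blk \<longleftrightarrow> (\<exists>y. (g,y) \<in> blk \<and> z = (y + t) mod 39)"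
  by (force simp: sh_def image_iff)

lemma Inl_blkOf: "Inl p \<in> blkOf t i \<longleftrightarrow> p \<in> sh t ` snd i"
  by (auto simp: blkOf_def split: option.splits)

lemma Inr_blkOf: "Inr q \<in> blkOf t i \<longleftrightarrow> (\<exists>c. fst i = Some c \<and> q = (c, t mod 3))"
  by (auto simp: blkOf_def split: option.splits)

lemma Blk_iff: "b \<in> Blk I \<longleftrightarrow> (\<exists>t x blk. b = blkOf t (x,blk) \<and> 0 \<le> t \<and> t < 39 \<and> (x,blk) \<in> I)"
  by (auto simp: Blk_def)

locale absd =
  fixes I :: "(nat option \<times> fpt set) set" and nb :: nat
  assumes nb: "nb > 0" and Ine: "I \<noteq> {}"
  and A1: "\<And>x blk. (x,blk) \<in> I \<Longrightarrow> blk \<subseteq> {..<8} \<times> {0..<39} \<and> inj_on fst blk \<and>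
              card blk = (case x of None \<Rightarrow> 4 | Some c \<Rightarrow> 3) \<and> (\<forall>c. x = Some c \<longrightarrow> c < nb)"
  and A2: "\<And>c g i. c < nb \<Longrightarrow> g < 8 \<Longrightarrow> 0 \<le> i \<Longrightarrow> i < 3 \<Longrightarrow>
              \<exists>blk z. (Some c, blk) \<in> I \<and> (g,z) \<in> blk \<and> z mod 3 = i"
  and A2u: "\<And>c blk z blk' z' g. (Some c, blk) \<in> I \<Longrightarrow> (Some c, blk') \<in> I \<Longrightarrow> (g,z) \<in> blk \<Longrightarrow>
              (g,z') \<in> blk' \<Longrightarrow> z mod 3 = z' mod 3 \<Longrightarrow> blk = blk'"
  and A3: "\<And>g h d. g < h \<Longrightarrow> h < 8 \<Longrightarrow> 0 \<le> d \<Longrightarrow> d < 39 \<Longrightarrow>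
              \<exists>x blk z1 z2. (x,blk) \<in> I \<and> (g,z1) \<in> blk \<and> (h,z2) \<in> blk \<and> (z2 - z1) mod 39 = d"
  and A4: "\<And>x blk z1 z2 x' blk' z1' z2' g h. (x,blk) \<in> I \<Longrightarrow> (x',blk') \<in> I \<Longrightarrow> (g,z1) \<in> blk \<Longrightarrow>
              (h,z2) \<in> blk \<Longrightarrow> (g,z1') \<in> blk' \<Longrightarrow> (h,z2') \<in> blk' \<Longrightarrow> g < h \<Longrightarrow>
              (z2 - z1) mod 39 = (z2' - z1') mod 39 \<Longrightarrow> x = x' \<and> blk = blk'"
begin

lemma bnd: "(x,blk) \<in> I \<Longrightarrow> (g,y) \<in> blk \<Longrightarrow> g < 8 \<and> 0 \<le> y \<and> y < 39"
  using A1 by fastforce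

lemma injf: "(x,blk) \<in> I \<Longrightarrow> (g,y) \<in> blk \<Longrightarrow> (g,y') \<in> blk \<Longrightarrow> y = y'"
  using A1 by (metis fst_conv inj_onD prod.inject)

lemma L_fin:
  assumes gh: "g < h" "h < 8" and z: "0 \<le> z1" "z1 < 39" "0 \<le> z2" "z2 < 39"
  shows "\<exists>!b. b \<in> Blk I \<and> Inl (g,z1) \<in> b \<and> Inl (h,z2) \<in> b"
proof -
  obtain x blk y1 y2 where i: "(x,blk) \<in> I" "(g,y1) \<in> blk" "(h,y2) \<in> blk"
    and d: "(y2 - y1) mod 39 = (z2 - z1) mod 39"
    using A3[OF gh, of "(z2 - z1) mod 39"] by auto
  define t where "t = (z1 - y1) mod 39"
  have t: "0 \<le> t" "t < 39" unfolding t_def by auto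
  have m1: "Inl (g,z1) \<in> blkOf t (x,blk)"
    unfolding Inl_blkOf Inl_in_sh using i(2) ar1a[OF z(1,2), of y1] by (auto simp: t_def)
  have m2: "Inl (h,z2) \<in> blkOf t (x,blk)"
    unfolding Inl_blkOf Inl_in_sh using i(3) ar1b[OF z(3,4) d] by (auto simp: t_def)
  show ?thesis
  proof (rule ex1I[of _ "blkOf t (x,blk)"])
    show "blkOf t (x,blk) \<in> Blk I \<and> Inl (g,z1) \<in> blkOf t (x,blk) \<and> Inl (h,z2) \<in> blkOf t (x,blk)"
      using m1 m2 t i(1) by (auto simp: Blk_iff)
  next
    fix b assume b: "b \<in> Blk I \<and> Inl (g,z1) \<in> b \<and> Inl (h,z2) \<in> b"
    then obtain t' x' blk' where b': "b = blkOf t' (x',blk')" "0 \<le> t'" "t' < 39" "(x',blk') \<in> I"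
      by (auto simp: Blk_iff)
    have "Inl (g,z1) \<in> blkOf t' (x',blk')" "Inl (h,z2) \<in> blkOf t' (x',blk')" using b b'(1) by auto
    then obtain y1' y2' where y': "(g,y1') \<in> blk'" "z1 = (y1' + t') mod 39"
        "(h,y2') \<in> blk'" "z2 = (y2' + t') mod 39"
      by (auto simp: Inl_blkOf Inl_in_sh)
    have "(y2' - y1') mod 39 = (z2 - z1) mod 39" using ar2 y' by metis
    then have e: "x = x' \<and> blk = blk'" using A4[OF i(1) b'(4) i(2,3) y'(1,3) gh(1)] d by simp
    then have "y1' = y1" using injf[OF b'(4) y'(1)] i(2) by simp
    then have "(y1 + t') mod 39 = (y1 + t) mod 39" using y'(2) ar1a[OF z(1,2), of y1] by (simp add: t_def)
    then have "t' = t" using ar3[OF b'(2,3) t] by simp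
    then show "b = blkOf t (x,blk)" using b'(1) e by simp
  qed
qed

lemma L_inf:
  assumes c: "c < nb" and j: "0 \<le> j" "j < 3" and g: "g < 8" and z: "0 \<le> z" "z < 39"
  shows "\<exists>!b. b \<in> Blk I \<and> Inr (c,j) \<in> b \<and> Inl (g,z) \<in> b"
proof -
  obtain blk y where i: "(Some c, blk) \<in> I" "(g,y) \<in> blk" "y mod 3 = (z - j) mod 3"
    using A2[OF c g, of "(z - j) mod 3"] by auto
  define t where "t = (z - y) mod 39"
  have t: "0 \<le> t" "t < 39" unfolding t_def by auto
  have tj: "t mod 3 = j" using ar5[OF i(3)] j by (simp add: t_def)
  have m1: "Inl (g,z) \<in> blkOf t (Some c,blk)"
    unfolding Inl_blkOf Inl_in_sh using i(2) ar1a[OF z, of y] by (auto simp: t_def)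
  have m2: "Inr (c,j) \<in> blkOf t (Some c,blk)"
    unfolding Inr_blkOf using tj by simp
  show ?thesis
  proof (rule ex1I[of _ "blkOf t (Some c,blk)"])
    show "blkOf t (Some c,blk) \<in> Blk I \<and> Inr (c,j) \<in> blkOf t (Some c,blk) \<and> Inl (g,z) \<in> blkOf t (Some c,blk)"
      using m1 m2 t i(1) by (auto simp: Blk_iff)
  next
    fix b assume b: "b \<in> Blk I \<and> Inr (c,j) \<in> b \<and> Inl (g,z) \<in> b"
    then obtain t' x' blk' where b': "b = blkOf t' (x',blk')" "0 \<le> t'" "t' < 39" "(x',blk') \<in> I"
      by (auto simp: Blk_iff)
    have "Inr (c,j) \<in> blkOf t' (x',blk')" "Inl (g,z) \<in> blkOf t' (x',blk')" using b b'(1) by auto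
    then have x': "x' = Some c" "t' mod 3 = j" by (auto simp: Inr_blkOf)
    obtain y' where y': "(g,y') \<in> blk'" "z = (y' + t') mod 39"
      using \<open>Inl (g,z) \<in> blkOf t' (x',blk')\<close> by (auto simp: Inl_blkOf Inl_in_sh)
    have "y' mod 3 = (z - j) mod 3" using ar6[OF y'(2)[symmetric] x'(2)] .
    then have e: "blk' = blk" using A2u[OF b'(4)[unfolded x'(1)] i(1) y'(1) i(2)] i(3) by simp
    then have "y' = y" using injf[OF i(1)] y'(1) i(2) by simp
    then have "(y + t') mod 39 = (y + t) mod 39" using y'(2) ar1a[OF z, of y] by (simp add: t_def)
    then have "t' = t" using ar3[OF b'(2,3) t] by simp
    then show "b = blkOf t (Some c,blk)" using b'(1) e x'(1) by simp
  qed
qed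


lemma fin_blk: "(x,blk) \<in> I \<Longrightarrow> finite blk"
proof -
  assume "(x,blk) \<in> I"
  then have "blk \<subseteq> {..<8} \<times> {0..<39}" using A1 by blast
  then show ?thesis by (rule finite_subset) auto
qed

lemma inj_sh: "(x,blk) \<in> I \<Longrightarrow> inj_on (sh t) blk"
proof (rule inj_onI)
  fix p q assume i: "(x,blk) \<in> I" and pq: "p \<in> blk" "q \<in> blk" "sh t p = sh t q"
  obtain g y where p: "p = (g,y)" by (cases p)
  obtain h y' where q: "q = (h,y')" by (cases q)
  have e: "g = h" "(y + t) mod 39 = (y' + t) mod 39" using pq(3) by (auto simp: sh_def p q)
  have b: "0 \<le> y" "y < 39" "0 \<le> y'" "y' < 39" using bnd[OF i] pq(1,2) p q by auto
  have "y = y'" using ar4[OF b e(2)] .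
  then show "p = q" using e(1) p q by simp
qed

lemma card_blkOf: assumes i: "(x,blk) \<in> I" shows "card (blkOf t (x,blk)) = 4"
proof -
  have c1: "card (Inl ` sh t ` blk :: pt set) = card blk"
    using inj_sh[OF i] by (simp add: card_image inj_on_image_iff)
  have f: "finite (Inl ` sh t ` blk :: pt set)" using fin_blk[OF i] by simp
  show ?thesis
  proof (cases x)
    case None then show ?thesis using c1 A1[OF i] by (simp add: blkOf_def)
  next
    case (Some c)
    have "Inr (c, t mod 3) \<notin> (Inl ` sh t ` blk :: pt set)" by auto
    then show ?thesis using c1 A1[OF i] f Some by (simp add: blkOf_def)
  qed
qed

lemma blkOf_sub: assumes i: "(x,blk) \<in> I" shows "blkOf t (x,blk) \<subseteq> Vs nb"
proof
  fix v assume v: "v \<in> blkOf t (x,blk)"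
  show "v \<in> Vs nb"
  proof (cases v)
    case (Inl p)
    then obtain g z where p: "p = (g,z)" by (cases p) auto
    with v Inl obtain y where "(g,y) \<in> blk" "z = (y+t) mod 39" by (auto simp: Inl_blkOf Inl_in_sh)
    then show ?thesis using bnd[OF i] Inl p by (auto simp: Vs_def)
  next
    case (Inr q)
    with v obtain c where "x = Some c" "q = (c, t mod 3)" by (auto simp: Inr_blkOf)
    then show ?thesis using A1[OF i] Inr by (auto simp: Vs_def)
  qed
qed

lemma memG: "X \<in> Gs nb \<Longrightarrow> v \<in> X \<Longrightarrow>
   (\<exists>g z. g < 8 \<and> 0 \<le> z \<and> z < 39 \<and> v = Inl (g,z) \<and> X = Inl ` ({g} \<times> {0..<39})) \<or>
   (\<exists>c j. c < nb \<and> 0 \<le> j \<and> j < 3 \<and> v = Inr (c,j) \<and> X = Inr ` ({..<nb} \<times> {0..<3}))"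
  by (auto simp: Gs_def)

lemma ex1_swap: "(\<exists>!b. P b \<and> x \<in> b \<and> y \<in> b) \<Longrightarrow> (\<exists>!b. P b \<and> y \<in> b \<and> x \<in> b)"
  by blast

theorem gdd: "is_4GDD (Vs nb) (Gs nb) (Blk I)"
proof -
  have 1: "finite (Vs nb)" by (simp add: Vs_def)
  have 2: "\<forall>X\<in>Gs nb. X \<noteq> {} \<and> X \<subseteq> Vs nb" using nb by (auto simp: Gs_def Vs_def)
  have 3: "\<Union>(Gs nb) = Vs nb" by (auto simp: Gs_def Vs_def)
  have 4: "\<forall>X\<in>Gs nb. \<forall>Y\<in>Gs nb. X \<noteq> Y \<longrightarrow> X \<inter> Y = {}" by (auto simp: Gs_def)
  have 5: "Blk I \<noteq> {}"
  proof -
    obtain x blk where "(x,blk) \<in> I" using Ine by auto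
    then have "blkOf 0 (x,blk) \<in> Blk I" unfolding Blk_iff
      by (intro exI[of _ 0] exI[of _ x] exI[of _ blk]) simp
    then show ?thesis by auto
  qed
  have 6: "\<forall>b\<in>Blk I. b \<subseteq> Vs nb \<and> card b = 4"
  proof
    fix b assume "b \<in> Blk I"
    then obtain t x blk where "b = blkOf t (x,blk)" "(x,blk) \<in> I" by (auto simp: Blk_iff)
    then show "b \<subseteq> Vs nb \<and> card b = 4" using blkOf_sub card_blkOf by simp
  qed
  have 7: "\<forall>X\<in>Gs nb. \<forall>Y\<in>Gs nb. \<forall>x\<in>X. \<forall>y\<in>Y. X \<noteq> Y \<longrightarrow> (\<exists>!b. b \<in> Blk I \<and> x \<in> b \<and> y \<in> b)"
  proof (intro ballI impI)
    fix X Y x y assume XY: "X \<in> Gs nb" "Y \<in> Gs nb" "x \<in> X" "y \<in> Y" "X \<noteq> Y"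
    from memG[OF XY(1,3)] memG[OF XY(2,4)] XY(5)
    show "\<exists>!b. b \<in> Blk I \<and> x \<in> b \<and> y \<in> b"
    proof (elim disjE exE conjE)
      fix g z h z' assume a: "g < 8" "0 \<le> z" "z < 39" "x = Inl (g,z)" "X = Inl ` ({g} \<times> {0..<39})"
        "h < 8" "0 \<le> z'" "z' < 39" "y = Inl (h,z')" "Y = Inl ` ({h} \<times> {0..<39})" "X \<noteq> Y"
      have "g \<noteq> h" using a by auto
      then consider "g < h" | "h < g" by linarith
      then show ?thesis
      proof cases
        case 1 then show ?thesis using L_fin[OF 1 a(6) a(2,3,7,8)] a by simp
      next
        case 2 then show ?thesis using ex1_swap[OF L_fin[OF 2 a(1) a(7,8,2,3)]] a by simp
      qed
    next
      fix g z c j assume a: "g < 8" "0 \<le> z" "z < 39" "x = Inl (g,z)"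
        "c < nb" "0 \<le> j" "j < 3" "y = Inr (c,j)"
      show ?thesis using ex1_swap[OF L_inf[OF a(5,6,7,1,2,3)]] a by simp
    next
      fix g z c j assume a: "g < 8" "0 \<le> z" "z < 39" "y = Inl (g,z)"
        "c < nb" "0 \<le> j" "j < 3" "x = Inr (c,j)"
      show ?thesis using L_inf[OF a(5,6,7,1,2,3)] a by simp
    next
      fix c j c' j' assume "X = Inr ` ({..<nb} \<times> {0..<3})" "Y = Inr ` ({..<nb} \<times> {0..<3})" "X \<noteq> Y"
      then show ?thesis by simp
    qed
  qed
  have 8: "\<forall>X\<in>Gs nb. \<forall>x\<in>X. \<forall>y\<in>X. x \<noteq> y \<longrightarrow> \<not> (\<exists>b\<in>Blk I. x \<in> b \<and> y \<in> b)"
  proof (intro ballI impI notI)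
    fix X x y assume a: "X \<in> Gs nb" "x \<in> X" "y \<in> X" "x \<noteq> y" and "\<exists>b\<in>Blk I. x \<in> b \<and> y \<in> b"
    then obtain t x' blk where b: "0 \<le> t" "t < 39" "(x',blk) \<in> I" "x \<in> blkOf t (x',blk)" "y \<in> blkOf t (x',blk)"
      by (auto simp: Blk_iff)
    from memG[OF a(1,2)] memG[OF a(1,3)] show False
    proof (elim disjE exE conjE)
      fix g z h z' assume c: "x = Inl (g,z)" "X = Inl ` ({g} \<times> {0..<39})" "y = Inl (h,z')" "X = Inl ` ({h} \<times> {0..<39})"
      have "Inl (g,0) \<in> X" using c(2) by auto
      then have "g = h" using c(4) by auto
      obtain y1 where y1: "(g,y1) \<in> blk" "z = (y1+t) mod 39" using b(4) c(1) by (auto simp: Inl_blkOf Inl_in_sh)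
      obtain y2 where y2: "(h,y2) \<in> blk" "z' = (y2+t) mod 39" using b(5) c(3) by (auto simp: Inl_blkOf Inl_in_sh)
      have "y1 = y2" using injf[OF b(3) y1(1)] y2(1) \<open>g = h\<close> by simp
      then show False using a(4) c y1 y2 \<open>g = h\<close> by simp
    next
      fix c j c' j' assume c: "x = Inr (c,j)" "y = Inr (c',j')"
      then show False using b(4,5) a(4) by (auto simp: Inr_blkOf)
    next
      fix g z c j assume c: "X = Inl ` ({g} \<times> {0..<39})" "X = Inr ` ({..<nb} \<times> {0..<3})"
      have "Inl (g,0) \<in> X" using c(1) by auto
      then show False using c(2) by auto
    next
      fix g z c j assume c: "X = Inr ` ({..<nb} \<times> {0..<3})" "X = Inl ` ({g} \<times> {0..<39})"
      have "Inl (g,0) \<in> X" using c(2) by auto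
      then show False using c(1) by auto
    qed
  qed
  show ?thesis unfolding is_4GDD_def
    by (rule conjI[OF 1 conjI[OF 2 conjI[OF 3 conjI[OF 4 conjI[OF 5 conjI[OF 6 conjI[OF 7 8]]]]]]])
qed

end

lemma gdd_type_Gs: "gdd_type (Gs nb) = replicate_mset 8 39 + {#3*nb#}"
proof -
  define F where "F = (\<lambda>g::nat. (Inl ` ({g} \<times> {0..<39}) :: pt set))"
  define R where "R = (Inr ` ({..<nb} \<times> {0..<3}) :: pt set)"
  have G: "Gs nb = insert R (F ` {..<8})" by (simp add: Gs_def F_def R_def)
  have injF: "inj_on F {..<8}"
  proof (rule inj_onI)
    fix g g' assume e: "F g = F g'"
    have "Inl (g,0) \<in> F g" by (simp add: F_def)
    then have "Inl (g,0) \<in> F g'" using e by simp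
    then show "g = g'" by (auto simp: F_def)
  qed
  have nR: "R \<notin> F ` {..<8}"
  proof
    assume "R \<in> F ` {..<8}"
    then obtain g where e: "R = F g" by auto
    have "Inl (g,0) \<in> F g" by (simp add: F_def)
    then have "Inl (g,0) \<in> R" using e by simp
    then show False by (auto simp: R_def)
  qed
  have cR: "card R = 3 * nb" by (simp add: R_def card_image card_cartesian_product)
  have cF: "\<And>g. card (F g) = 39" by (simp add: F_def card_image card_cartesian_product)
  have "gdd_type (Gs nb) = image_mset card (add_mset R (mset_set (F ` {..<8})))"
    unfolding gdd_type_def G using nR by (simp add: mset_set.insert)
  also have "\<dots> = add_mset (3*nb) (image_mset card (image_mset F (mset_set {..<8})))"
    using injF cR by (simp add: image_mset_mset_set)
  also have "image_mset card (image_mset F (mset_set {..<8::nat})) = image_mset (\<lambda>_. 39) (mset_set {..<8::nat})"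
    by (simp add: multiset.map_comp comp_def cF)
  also have "\<dots> = replicate_mset 8 39" by (simp add: image_mset_const_eq)
  finally show ?thesis by simp
qed

lemma gdd_inj:
  assumes f: "inj f" and g: "is_4GDD V G B"
  shows "is_4GDD (f ` V) ((`) f ` G) ((`) f ` B)"
  using g unfolding is_4GDD_def
proof (elim conjE, intro conjI)
  assume a: "finite V" "\<forall>X\<in>G. X \<noteq> {} \<and> X \<subseteq> V" "\<Union> G = V" "\<forall>X\<in>G. \<forall>Y\<in>G. X \<noteq> Y \<longrightarrow> X \<inter> Y = {}"
    "B \<noteq> {}" "\<forall>b\<in>B. b \<subseteq> V \<and> card b = 4"
    "\<forall>X\<in>G. \<forall>Y\<in>G. \<forall>x\<in>X. \<forall>y\<in>Y. X \<noteq> Y \<longrightarrow> (\<exists>!b. b \<in> B \<and> x \<in> b \<and> y \<in> b)"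
    "\<forall>X\<in>G. \<forall>x\<in>X. \<forall>y\<in>X. x \<noteq> y \<longrightarrow> \<not> (\<exists>b\<in>B. x \<in> b \<and> y \<in> b)"
  have im: "\<And>x A. f x \<in> f ` A \<longleftrightarrow> x \<in> A" using f by (simp add: inj_image_mem_iff)
  show "finite (f ` V)" using a(1) by simp
  show "\<forall>X\<in>(`) f ` G. X \<noteq> {} \<and> X \<subseteq> f ` V"
  proof
    fix X' assume "X' \<in> (`) f ` G"
    then obtain X where X: "X \<in> G" "X' = f ` X" by auto
    then have "X \<noteq> {}" "X \<subseteq> V" using a(2) by auto
    then show "X' \<noteq> {} \<and> X' \<subseteq> f ` V" using X(2) by (simp add: image_mono)
  qed
  show "\<Union> ((`) f ` G) = f ` V" using a(3) by (simp add: image_Union[symmetric])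
  show "\<forall>X\<in>(`) f ` G. \<forall>Y\<in>(`) f ` G. X \<noteq> Y \<longrightarrow> X \<inter> Y = {}"
  proof (intro ballI impI)
    fix X' Y' assume "X' \<in> (`) f ` G" "Y' \<in> (`) f ` G" "X' \<noteq> Y'"
    then obtain X Y where X: "X \<in> G" "X' = f ` X" "Y \<in> G" "Y' = f ` Y" by auto
    then have "X \<noteq> Y" using \<open>X' \<noteq> Y'\<close> by blast
    then have "X \<inter> Y = {}" using a(4) X by blast
    then show "X' \<inter> Y' = {}" using X image_Int[OF f, of X Y] by simp
  qed
  show "(`) f ` B \<noteq> {}" using a(5) by simp
  show "\<forall>b\<in>(`) f ` B. b \<subseteq> f ` V \<and> card b = 4"
  proof
    fix b' assume "b' \<in> (`) f ` B"
    then obtain b where b: "b \<in> B" "b' = f ` b" by auto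
    have "card (f ` b) = card b" using inj_on_subset[OF f] by (simp add: card_image)
    moreover have "b \<subseteq> V" "card b = 4" using a(6) b(1) by auto
    ultimately show "b' \<subseteq> f ` V \<and> card b' = 4" using b(2) by (simp add: image_mono)
  qed
  show "\<forall>X\<in>(`) f ` G. \<forall>Y\<in>(`) f ` G. \<forall>x\<in>X. \<forall>y\<in>Y. X \<noteq> Y \<longrightarrow> (\<exists>!b. b \<in> (`) f ` B \<and> x \<in> b \<and> y \<in> b)"
  proof (intro ballI impI)
    fix X' Y' x' y' assume h: "X' \<in> (`) f ` G" "Y' \<in> (`) f ` G" "x' \<in> X'" "y' \<in> Y'" "X' \<noteq> Y'"
    obtain X where X: "X \<in> G" "X' = f ` X" using h(1) by auto
    obtain Y where Y: "Y \<in> G" "Y' = f ` Y" using h(2) by auto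
    obtain x where x: "x \<in> X" "x' = f x" using h(3) X(2) by auto
    obtain y where y: "y \<in> Y" "y' = f y" using h(4) Y(2) by auto
    have XY: "X \<in> G" "Y \<in> G" "X' = f ` X" "Y' = f ` Y" "x \<in> X" "y \<in> Y" "x' = f x" "y' = f y"
      using X Y x y by auto
    have "X \<noteq> Y" using h(5) XY(3,4) by auto
    then have e: "\<exists>!b. b \<in> B \<and> x \<in> b \<and> y \<in> b"
      using a(7)[rule_format, OF XY(1) XY(2) XY(5) XY(6)] by simp
    then obtain b where bb: "b \<in> B \<and> x \<in> b \<and> y \<in> b" and u0: "\<forall>b'. b' \<in> B \<and> x \<in> b' \<and> y \<in> b' \<longrightarrow> b' = b"
      by (rule ex1E)
    have b: "b \<in> B" "x \<in> b" "y \<in> b" using bb by auto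
    have u: "\<And>b'. b' \<in> B \<and> x \<in> b' \<and> y \<in> b' \<Longrightarrow> b' = b" using u0 by simp
    show "\<exists>!b. b \<in> (`) f ` B \<and> x' \<in> b \<and> y' \<in> b"
    proof (rule ex1I[of _ "f ` b"])
      show "f ` b \<in> (`) f ` B \<and> x' \<in> f ` b \<and> y' \<in> f ` b" using b XY by auto
    next
      fix b' assume h2: "b' \<in> (`) f ` B \<and> x' \<in> b' \<and> y' \<in> b'"
      then obtain b2 where b2: "b2 \<in> B" "b' = f ` b2" by auto
      have "x \<in> b2" "y \<in> b2" using h2 b2(2) XY(7,8) im by auto
      then have "b2 = b" using u b2(1) by simp
      then show "b' = f ` b" using b2(2) by simp
    qed
  qed
  show "\<forall>X\<in>(`) f ` G. \<forall>x\<in>X. \<forall>y\<in>X. x \<noteq> y \<longrightarrow> \<not> (\<exists>b\<in>(`) f ` B. x \<in> b \<and> y \<in> b)"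
  proof (intro ballI impI notI)
    fix X' x' y' assume h: "X' \<in> (`) f ` G" "x' \<in> X'" "y' \<in> X'" "x' \<noteq> y'" "\<exists>b\<in>(`) f ` B. x' \<in> b \<and> y' \<in> b"
    obtain X where X: "X \<in> G" "X' = f ` X" using h(1) by auto
    obtain x where x: "x \<in> X" "x' = f x" using h(2) X(2) by auto
    obtain y where y: "y \<in> X" "y' = f y" using h(3) X(2) by auto
    obtain b' where b': "b' \<in> (`) f ` B" "x' \<in> b'" "y' \<in> b'" using h(5) by blast
    obtain b where b: "b \<in> B" "b' = f ` b" using b'(1) by auto
    have "x \<in> b" "y \<in> b" using b'(2,3) b(2) x(2) y(2) im by auto
    moreover have "x \<noteq> y" using h(4) x y by auto
    ultimately show False using a(8) X(1) x(1) y(1) b(1) by blast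
  qed
qed

lemma gdd_type_inj: assumes f: "inj f" shows "gdd_type ((`) f ` G) = gdd_type G"
proof -
  have i: "inj_on ((`) f) G" using f by (auto simp: inj_on_def inj_image_eq_iff)
  have "gdd_type ((`) f ` G) = image_mset card (image_mset ((`) f) (mset_set G))"
    unfolding gdd_type_def using i by (simp add: image_mset_mset_set)
  also have "\<dots> = image_mset card (mset_set G)"
    by (simp add: multiset.map_comp comp_def card_image inj_on_subset[OF f])
  finally show ?thesis unfolding gdd_type_def .
qed

lemma has_from_absd: assumes "absd I nb" shows "has_4GDD_of_type (replicate_mset 8 39 + {#3*nb#})"
proof -
  have g: "is_4GDD (Vs nb) (Gs nb) (Blk I)" using absd.gdd[OF assms] .
  let ?f = "to_nat :: pt \<Rightarrow> nat"
  have "is_4GDD (?f ` Vs nb) ((`) ?f ` Gs nb) ((`) ?f ` Blk I)" by (rule gdd_inj[OF inj_to_nat g])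
  moreover have "gdd_type ((`) ?f ` Gs nb) = replicate_mset 8 39 + {#3*nb#}"
    by (simp add: gdd_type_inj gdd_type_Gs)
  ultimately show ?thesis unfolding has_4GDD_of_type_def by blast
qed

function merge :: "int list \<Rightarrow> int list \<Rightarrow> int list"
and mstep :: "bool \<Rightarrow> int \<Rightarrow> int list \<Rightarrow> int \<Rightarrow> int list \<Rightarrow> int list" where
  "merge [] ys = ys"
| "merge (x#xs) [] = x#xs"
| "merge (x#xs) (y#ys) = mstep (x \<le> y) x xs y ys"
| "mstep True x xs y ys = x # merge xs (y#ys)"
| "mstep False x xs y ys = y # merge (x#xs) ys"
  by pat_completeness auto
termination by (relation "measure (\<lambda>a. case a of Inl (xs,ys) \<Rightarrow> 2*(length xs + length ys) | Inr (b,x,xs,y,ys) \<Rightarrow> 2*(length xs + length ys) + 3)") auto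

fun mergeall :: "int list list \<Rightarrow> int list list" where
  "mergeall (a#b#rest) = merge a b # mergeall rest"
| "mergeall xs = xs"

lemma length_mergeall: "length (mergeall xs) \<le> length xs"
  by (induction xs rule: mergeall.induct) auto

function msortL :: "int list list \<Rightarrow> int list" where
  "msortL [] = []"
| "msortL [a] = a"
| "msortL (a#b#rest) = msortL (mergeall (a#b#rest))"
  by pat_completeness auto
termination by (relation "measure length") (auto simp: le_imp_less_Suc length_mergeall)

definition msort :: "int list \<Rightarrow> int list" where "msort xs = msortL (map (\<lambda>x. [x]) xs)"

fun ssorted :: "int list \<Rightarrow> bool" where
  "ssorted (x#y#zs) = (x < y \<and> ssorted (y#zs))"
| "ssorted _ = True"

definition insts :: "(nat \<times> int) list list list \<Rightarrow> (nat \<times> int) list list \<Rightarrow> (nat option \<times> (nat \<times> int) list) list" where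
  "insts cls qs = concat (map (\<lambda>(c,C). map (\<lambda>T. (Some c, T)) C) (enumerate 0 cls)) @ map (\<lambda>q. (None, q)) qs"

definition slots :: "(nat \<times> int) list \<Rightarrow> (nat \<times> nat \<times> int) list" where
  "slots T = [(fst p, fst q, (snd q - snd p) mod 39). p \<leftarrow> T, q \<leftarrow> T, fst p < fst q]"

definition scode :: "nat \<times> nat \<times> int \<Rightarrow> int" where
  "scode s = (case s of (g,h,d) \<Rightarrow> int ((g*8+h)*39) + d)"

definition okblk :: "nat \<Rightarrow> (nat \<times> int) list \<Rightarrow> bool" where
  "okblk n T = (length T = n \<and> distinct (map fst T) \<and> (\<forall>p\<in>set T. fst p < 8 \<and> 0 \<le> snd p \<and> snd p < 39))"

definition okcls :: "(nat \<times> int) list list \<Rightarrow> bool" where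
  "okcls C = (length (concat C) = 24 \<and> distinct (map (\<lambda>p. (fst p, snd p mod 3)) (concat C)) \<and> (\<forall>T\<in>set C. okblk 3 T))"

definition allslots where "allslots cls qs = concat (map (slots \<circ> snd) (insts cls qs))"

definition chk2 :: "int list \<Rightarrow> bool" where "chk2 xs = (length xs = 1092 \<and> ssorted xs)"

definition check :: "(nat \<times> int) list list list \<Rightarrow> (nat \<times> int) list list \<Rightarrow> bool" where
  "check cls qs = (cls \<noteq> [] \<and> (\<forall>C\<in>set cls. okcls C) \<and> (\<forall>q\<in>set qs. okblk 4 q) \<and>
     chk2 (msort (map scode (allslots cls qs))))"


lemma mset_merge: "mset (merge xs ys) = mset xs + mset ys"
  and mset_mstep: "mset (mstep b x xs y ys) = add_mset x (add_mset y (mset xs + mset ys))"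
  by (induction xs ys and b x xs y ys rule: merge_mstep.induct) auto

lemma mset_mergeall: "mset (concat (mergeall L)) = mset (concat L)"
  by (induction L rule: mergeall.induct) (auto simp: mset_merge)

lemma mset_msortL: "mset (msortL L) = mset (concat L)"
  by (induction L rule: msortL.induct) (auto simp: mset_mergeall mset_merge)

lemma mset_msort: "mset (msort xs) = mset xs"
  by (simp add: msort_def mset_msortL)

lemma ssorted_sorted: "ssorted xs \<Longrightarrow> sorted_wrt (<) xs"
  by (induction xs rule: ssorted.induct) auto

lemma distinct_of_msort: "ssorted (msort xs) \<Longrightarrow> distinct xs"
proof -
  assume "ssorted (msort xs)"
  then have "distinct (msort xs)" using ssorted_sorted strict_sorted_iff by blast
  then show ?thesis using mset_eq_imp_distinct_iff[OF mset_msort] by blast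
qed

lemma dcm: "distinct (concat (map f L)) \<Longrightarrow> a \<in> set L \<Longrightarrow> b \<in> set L \<Longrightarrow> u \<in> set (f a) \<Longrightarrow> u \<in> set (f b) \<Longrightarrow> a = b"
  by (induction L) auto

lemma mem_insts: "(x,T) \<in> set (insts cls qs) \<longleftrightarrow> (\<exists>c. x = Some c \<and> c < length cls \<and> T \<in> set (cls ! c)) \<or> (x = None \<and> T \<in> set qs)"
proof
  assume "(x,T) \<in> set (insts cls qs)"
  then show "(\<exists>c. x = Some c \<and> c < length cls \<and> T \<in> set (cls ! c)) \<or> (x = None \<and> T \<in> set qs)"
    by (auto simp: insts_def in_set_enumerate_eq)
next
  assume h: "(\<exists>c. x = Some c \<and> c < length cls \<and> T \<in> set (cls ! c)) \<or> (x = None \<and> T \<in> set qs)"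
  show "(x,T) \<in> set (insts cls qs)"
  proof (cases "x = None")
    case True then show ?thesis using h by (auto simp: insts_def)
  next
    case False
    then obtain c where c: "x = Some c" "c < length cls" "T \<in> set (cls ! c)" using h by auto
    have "(c, cls ! c) \<in> set (enumerate 0 cls)" using c(2) by (simp add: in_set_enumerate_eq)
    then show ?thesis using c unfolding insts_def by force
  qed
qed

lemma mem_slots: "(g,h,d) \<in> set (slots T) \<longleftrightarrow> (\<exists>p\<in>set T. \<exists>q\<in>set T. fst p < fst q \<and> g = fst p \<and> h = fst q \<and> d = (snd q - snd p) mod 39)"
  by (auto simp: slots_def)

lemma okT: "okblk n T \<Longrightarrow> set T \<subseteq> {..<8} \<times> {0..<39} \<and> inj_on fst (set T) \<and> card (set T) = n"
  by (auto simp: okblk_def distinct_map distinct_card)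

lemma cardU: "card (Sigma {..<8::nat} (\<lambda>g. Sigma {g<..<8} (\<lambda>h. {0..<39::int}))) = 1092"
proof -
  have "card (Sigma {..<8::nat} (\<lambda>g. Sigma {g<..<8} (\<lambda>h. {0..<39::int}))) = (\<Sum>g<8. (7 - g) * 39)"
    by (simp add: card_cartesian_product)
  also have "\<dots> = 1092" by (simp add: lessThan_nat_numeral)
  finally show ?thesis .
qed

lemma check_absd:
  assumes ck: "check cls qs"
  shows "absd ((\<lambda>(x,T). (x, set T)) ` set (insts cls qs)) (length cls)"
proof -
  let ?L = "insts cls qs"
  let ?I = "(\<lambda>(x,T). (x, set T)) ` set ?L"
  have ne: "cls \<noteq> []" and okc: "\<forall>C\<in>set cls. okcls C" and okq: "\<forall>q\<in>set qs. okblk 4 q"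
    and ch: "chk2 (msort (map scode (allslots cls qs)))" using ck by (auto simp: check_def)
  have memI: "\<And>x blk. (x,blk) \<in> ?I \<longleftrightarrow> (\<exists>T. (x,T) \<in> set ?L \<and> blk = set T)" by force
  have okL: "\<And>x T. (x,T) \<in> set ?L \<Longrightarrow> okblk (case x of None \<Rightarrow> 4 | Some c \<Rightarrow> 3) T \<and> (\<forall>c. x = Some c \<longrightarrow> c < length cls)"
  proof -
    fix x T assume "(x,T) \<in> set ?L"
    then consider c where "x = Some c" "c < length cls" "T \<in> set (cls ! c)" | "x = None" "T \<in> set qs"
      unfolding mem_insts by blast
    then show "okblk (case x of None \<Rightarrow> 4 | Some c \<Rightarrow> 3) T \<and> (\<forall>c. x = Some c \<longrightarrow> c < length cls)"
    proof cases
      case 1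
      then have "okcls (cls ! c)" using okc nth_mem by blast
      then show ?thesis using 1 by (auto simp: okcls_def)
    next
      case 2 then show ?thesis using okq by auto
    qed
  qed
  define S where "S = allslots cls qs"
  have S_def': "S = concat (map (slots \<circ> snd) ?L)" by (simp add: S_def allslots_def)
  have dS0: "distinct (map scode S)" using ch distinct_of_msort by (auto simp: chk2_def S_def)
  then have dS: "distinct S" by (simp add: distinct_map)
  have lS: "length S = 1092"
  proof -
    have "length (msort (map scode S)) = 1092" using ch by (simp add: chk2_def S_def)
    then show ?thesis using mset_eq_length[OF mset_msort, of "map scode S"] by simp
  qed
  define U where "U = Sigma {..<8::nat} (\<lambda>g. Sigma {g<..<8} (\<lambda>h. {0..<39::int}))"
  have sub: "set S \<subseteq> U"
  proof
    fix s assume "s \<in> set S"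
    then obtain x T where xT: "(x,T) \<in> set ?L" "s \<in> set (slots T)" unfolding S_def' by auto
    obtain g h d where s: "s = (g,h,d)" by (cases s) auto
    have "(g,h,d) \<in> set (slots T)" using xT(2) s by simp
    then obtain p q where pq: "p \<in> set T" "q \<in> set T" "fst p < fst q" "g = fst p" "h = fst q" "d = (snd q - snd p) mod 39"
      unfolding mem_slots by blast
    have "set T \<subseteq> {..<8} \<times> {0..<39}" using okT okL[OF xT(1)] by blast
    then have "fst q < 8" using pq(2) by auto
    then show "s \<in> U" using pq s by (auto simp: U_def)
  qed
  have SU: "set S = U"
  proof (rule card_subset_eq)
    show "finite U" by (simp add: U_def)
    show "set S \<subseteq> U" by (rule sub)
    show "card (set S) = card U" using distinct_card[OF dS] lS cardU by (simp add: U_def)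
  qed
  show ?thesis
  proof (unfold_locales)
    show "length cls > 0" using ne by simp
  next
    obtain C where C: "C = cls ! 0" by simp
    have "C \<in> set cls" using ne C by simp
    then have "length (concat C) = 24" using okc by (auto simp: okcls_def)
    then obtain T where T: "T \<in> set C" by (cases C) auto
    then have "(Some 0, T) \<in> set ?L" using ne C by (auto simp: mem_insts)
    then show "?I \<noteq> {}" by auto
  next
    fix x blk assume "(x,blk) \<in> ?I"
    then obtain T where T: "(x,T) \<in> set ?L" "blk = set T" using memI by blast
    show "blk \<subseteq> {..<8} \<times> {0..<39} \<and> inj_on fst blk \<and> card blk = (case x of None \<Rightarrow> 4 | Some c \<Rightarrow> 3) \<and> (\<forall>c. x = Some c \<longrightarrow> c < length cls)"
      using okT okL[OF T(1)] T(2) by blast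
  next
    fix c g :: nat and i :: int assume a: "c < length cls" "g < 8" "0 \<le> i" "i < 3"
    define C where "C = cls ! c"
    have okC: "okcls C" using okc a(1) by (simp add: C_def)
    define mp where "mp = (\<lambda>p::nat\<times>int. (fst p, snd p mod 3))"
    have sub2: "set (map mp (concat C)) \<subseteq> {..<8} \<times> {0..<3}"
    proof
      fix v assume "v \<in> set (map mp (concat C))"
      then obtain p T where "T \<in> set C" "p \<in> set T" "v = mp p" by auto
      moreover have "okblk 3 T" using okC \<open>T \<in> set C\<close> by (auto simp: okcls_def)
      ultimately show "v \<in> {..<8} \<times> {0..<3}" by (auto simp: okblk_def mp_def)
    qed
    have eq2: "set (map mp (concat C)) = {..<8} \<times> {0..<3}"
    proof (rule card_subset_eq)
      show "finite ({..<8::nat} \<times> {0..<3::int})" by simp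
      show "set (map mp (concat C)) \<subseteq> {..<8} \<times> {0..<3}" by (rule sub2)
      have d: "distinct (map mp (concat C))" and l: "length (concat C) = 24" using okC by (auto simp: okcls_def mp_def)
      have c1: "card (set (map mp (concat C))) = 24" using distinct_card[OF d] l by (metis length_map)
      then show "card (set (map mp (concat C))) = card ({..<8::nat} \<times> {0..<3::int})"
        by (simp add: card_cartesian_product)
    qed
    have "(g,i) \<in> set (map mp (concat C))" using a eq2 by auto
    then obtain p T where pT: "T \<in> set C" "p \<in> set T" "mp p = (g,i)" by auto
    have "(Some c, T) \<in> set ?L" using pT(1) a(1) by (auto simp: mem_insts C_def)
    then have "(Some c, set T) \<in> ?I" by force
    moreover have "(g, snd p) \<in> set T" "snd p mod 3 = i" using pT(2,3) by (auto simp: mp_def)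
    ultimately show "\<exists>blk z. (Some c, blk) \<in> ?I \<and> (g,z) \<in> blk \<and> z mod 3 = i" by blast
  next
    fix c blk z blk' z' g
    assume a: "(Some c, blk) \<in> ?I" "(Some c, blk') \<in> ?I" "(g,z) \<in> blk" "(g,z') \<in> blk'" "z mod 3 = z' mod 3"
    obtain T where T: "(Some c, T) \<in> set ?L" "blk = set T" using a(1) memI by blast
    obtain T' where T': "(Some c, T') \<in> set ?L" "blk' = set T'" using a(2) memI by blast
    have c: "c < length cls" "T \<in> set (cls ! c)" "T' \<in> set (cls ! c)" using T(1) T'(1) by (auto simp: mem_insts)
    define C where "C = cls ! c"
    have okC: "okcls C" using okc c(1) by (simp add: C_def)
    define mp where "mp = (\<lambda>p::nat\<times>int. (fst p, snd p mod 3))"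
    have dm: "distinct (map mp (concat C))" using okC by (simp add: okcls_def mp_def)
    then have inj: "inj_on mp (set (concat C))" and dC: "distinct (concat C)" by (simp_all add: distinct_map)
    have m1: "(g,z) \<in> set (concat C)" "(g,z') \<in> set (concat C)" using a(3,4) T(2) T'(2) c by (auto simp: C_def)
    have "(g,z) = (g,z')" using inj_onD[OF inj _ m1] a(5) by (simp add: mp_def)
    then have "(g,z) \<in> set T'" using a(4) T'(2) by simp
    then have "T = T'" using dcm[of id C T T' "(g,z)"] dC c a(3) T(2) by (simp add: C_def)
    then show "blk = blk'" using T(2) T'(2) by simp
  next
    fix g h :: nat and d :: int assume a: "g < h" "h < 8" "0 \<le> d" "d < 39"
    have "(g,h,d) \<in> set S" using SU a by (auto simp: U_def)
    then obtain x T where xT: "(x,T) \<in> set ?L" "(g,h,d) \<in> set (slots T)" unfolding S_def' by auto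
    from xT(2) obtain p q where pq: "p \<in> set T" "q \<in> set T" "g = fst p" "h = fst q" "d = (snd q - snd p) mod 39"
      unfolding mem_slots by blast
    have "(x, set T) \<in> ?I" using xT(1) by force
    moreover have "(g, snd p) \<in> set T" "(h, snd q) \<in> set T" using pq by auto
    ultimately show "\<exists>x blk z1 z2. (x,blk) \<in> ?I \<and> (g,z1) \<in> blk \<and> (h,z2) \<in> blk \<and> (z2 - z1) mod 39 = d"
      using pq(5) by blast
  next
    fix x blk z1 z2 x' blk' z1' z2' g h
    assume a: "(x,blk) \<in> ?I" "(x',blk') \<in> ?I" "(g,z1) \<in> blk" "(h,z2) \<in> blk" "(g,z1') \<in> blk'"
      "(h,z2') \<in> blk'" "g < h" "(z2 - z1) mod 39 = (z2' - z1') mod 39"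
    obtain T where T: "(x,T) \<in> set ?L" "blk = set T" using a(1) memI by blast
    obtain T' where T': "(x',T') \<in> set ?L" "blk' = set T'" using a(2) memI by blast
    have s1: "(g,h,(z2 - z1) mod 39) \<in> set ((slots \<circ> snd) (x,T))"
      using a(3,4,7) T(2) unfolding comp_def snd_conv mem_slots by force
    have s2: "(g,h,(z2 - z1) mod 39) \<in> set ((slots \<circ> snd) (x',T'))"
      using a(5,6,7,8) T'(2) unfolding comp_def snd_conv mem_slots by force
    have "(x,T) = (x',T')" using dcm[OF dS[unfolded S_def'] T(1) T'(1) s1 s2] .
    then show "x = x' \<and> blk = blk'" using T(2) T'(2) by simp
  qed
qed

lemma final: "check cls qs \<Longrightarrow> has_4GDD_of_type (replicate_mset 8 39 + {#3 * length cls#})"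
  using has_from_absd check_absd by blast

definition cls120 :: "(nat \<times> int) list list list" where
  "cls120 = [[[(0,3), (3,18), (6,12)], [(0,16), (3,10), (6,17)], [(1,25), (2,12), (5,26)], [(1,24), (4,8), (7,36)], [(2,17), (3,17), (7,16)], [(4,3), (6,4), (7,38)], [(0,20), (2,22), (5,31)], [(1,2), (4,4), (5,9)]],
    [[(0,19), (4,1), (6,15)], [(1,5), (2,2), (3,33)], [(2,13), (3,29), (5,0)], [(0,21), (4,8), (7,0)], [(1,12), (5,25), (7,32)], [(0,14), (1,37), (6,17)], [(3,1), (5,8), (7,22)], [(2,18), (4,12), (6,16)]],
    [[(1,36), (2,36), (5,20)], [(1,8), (2,19), (5,4)], [(0,24), (3,38), (4,7)], [(3,21), (5,24), (6,31)], [(4,3), (6,20), (7,16)], [(0,26), (1,22), (7,18)], [(0,13), (2,8), (3,4)], [(4,38), (6,24), (7,23)]],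
    [[(1,31), (5,11), (6,1)], [(0,37), (6,6), (7,36)], [(0,33), (2,18), (4,34)], [(2,7), (3,27), (5,36)], [(1,0), (2,35), (7,14)], [(3,29), (4,29), (6,5)], [(0,17), (5,37), (7,4)], [(1,32), (3,28), (4,21)]],
    [[(0,6), (1,17), (6,20)], [(0,11), (6,33), (7,20)], [(3,21), (4,37), (6,10)], [(2,2), (3,5), (4,20)], [(3,19), (4,3), (5,3)], [(1,15), (2,36), (7,36)], [(0,22), (1,10), (5,25)], [(2,37), (5,35), (7,1)]],
    [[(1,32), (2,10), (6,30)], [(1,15), (4,33), (7,6)], [(3,35), (4,26), (7,35)], [(0,31), (6,22), (7,4)], [(3,18), (5,31), (6,14)], [(0,29), (2,5), (5,36)], [(1,19), (2,0), (4,19)], [(0,30), (3,19), (5,17)]],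
    [[(1,18), (2,24), (6,8)], [(1,7), (2,5), (5,27)], [(0,35), (6,33), (7,33)], [(0,24), (3,37), (4,31)], [(3,32), (6,1), (7,19)], [(1,23), (4,27), (5,22)], [(0,13), (2,19), (7,38)], [(3,12), (4,26), (5,23)]],
    [[(1,8), (5,8), (7,6)], [(0,0), (4,25), (6,5)], [(1,31), (2,1), (3,29)], [(4,32), (6,4), (7,26)], [(1,30), (3,31), (5,7)], [(0,14), (2,8), (6,24)], [(0,28), (3,0), (4,3)], [(2,15), (5,12), (7,13)]],
    [[(3,37), (4,38), (5,23)], [(2,21), (6,20), (7,22)], [(0,19), (5,18), (7,14)], [(1,4), (4,33), (7,21)], [(2,8), (3,3), (4,31)], [(0,33), (1,8), (3,20)], [(0,17), (2,10), (6,37)], [(1,30), (5,28), (6,36)]],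
    [[(1,18), (2,1), (3,3)], [(1,13), (4,19), (6,35)], [(2,9), (3,32), (5,28)], [(0,3), (3,37), (7,7)], [(0,13), (1,20), (6,36)], [(0,2), (5,23), (7,15)], [(4,3), (6,16), (7,32)], [(2,32), (4,38), (5,21)]],
    [[(2,22), (6,29), (7,30)], [(2,15), (3,14), (6,19)], [(0,17), (4,8), (7,13)], [(0,0), (4,28), (5,18)], [(2,14), (4,9), (6,15)], [(0,37), (1,6), (3,3)], [(1,34), (3,1), (5,31)], [(1,14), (5,38), (7,14)]],
    [[(1,21), (5,29), (6,15)], [(0,17), (2,3), (4,1)], [(1,35), (2,4), (3,17)], [(0,25), (2,26), (5,27)], [(1,19), (4,35), (7,26)], [(0,3), (4,18), (5,37)], [(3,31), (6,32), (7,36)], [(3,9), (6,13), (7,25)]],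
    [[(2,36), (4,4), (5,31)], [(3,4), (6,23), (7,38)], [(1,31), (4,23), (5,17)], [(0,18), (4,24), (7,19)], [(0,16), (1,5), (2,19)], [(1,33), (5,36), (6,12)], [(3,33), (6,25), (7,0)], [(0,38), (2,38), (3,17)]],
    [[(2,35), (5,26), (7,19)], [(3,30), (5,7), (6,13)], [(2,21), (4,20), (7,23)], [(0,25), (1,27), (4,21)], [(2,25), (3,16), (4,28)], [(0,5), (1,8), (6,18)], [(0,15), (5,21), (6,14)], [(1,7), (3,2), (7,15)]],
    [[(2,23), (5,27), (7,12)], [(4,16), (5,34), (6,34)], [(1,12), (4,21), (5,29)], [(0,38), (2,19), (3,9)], [(0,31), (1,29), (3,28)], [(3,26), (6,21), (7,29)], [(0,0), (1,4), (7,7)], [(2,6), (4,2), (6,32)]],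
    [[(1,11), (3,28), (7,21)], [(0,5), (2,17), (7,34)], [(2,21), (4,10), (6,33)], [(0,25), (1,1), (5,10)], [(3,32), (5,17), (6,20)], [(0,30), (3,33), (4,3)], [(4,8), (5,18), (6,34)], [(1,0), (2,1), (7,32)]],
    [[(3,15), (5,35), (7,0)], [(3,35), (5,25), (6,20)], [(5,30), (6,21), (7,7)], [(0,6), (2,14), (4,11)], [(0,19), (1,0), (6,1)], [(0,35), (1,1), (4,9)], [(1,11), (2,15), (4,7)], [(2,31), (3,19), (7,17)]],
    [[(0,37), (2,29), (3,38)], [(1,14), (4,26), (7,3)], [(3,22), (4,4), (7,14)], [(0,30), (3,3), (5,34)], [(4,24), (5,8), (6,13)], [(1,16), (2,9), (6,33)], [(0,20), (2,16), (6,26)], [(1,36), (5,9), (7,28)]],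
    [[(4,17), (5,9), (6,20)], [(0,29), (2,4), (3,11)], [(4,34), (5,8), (7,34)], [(2,9), (3,7), (6,24)], [(1,35), (2,14), (6,31)], [(0,37), (1,27), (3,15)], [(0,15), (1,10), (7,23)], [(4,12), (5,10), (7,18)]],
    [[(1,2), (4,22), (6,4)], [(5,19), (6,20), (7,18)], [(0,6), (1,18), (3,8)], [(0,26), (3,6), (5,23)], [(2,6), (4,14), (6,24)], [(1,19), (3,10), (7,7)], [(2,5), (4,18), (7,20)], [(0,34), (2,25), (5,30)]],
    [[(2,8), (6,1), (7,34)], [(1,12), (4,3), (5,38)], [(0,3), (1,22), (3,26)], [(0,25), (6,27), (7,30)], [(4,32), (5,0), (6,20)], [(4,34), (5,1), (7,14)], [(1,11), (2,6), (3,3)], [(0,11), (2,34), (3,7)]],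
    [[(1,20), (2,0), (4,5)], [(3,23), (5,22), (7,4)], [(3,34), (4,22), (6,27)], [(1,37), (3,30), (6,32)], [(2,10), (5,9), (7,6)], [(0,19), (2,38), (5,11)], [(0,33), (1,24), (4,12)], [(0,38), (6,10), (7,29)]],
    [[(2,35), (3,28), (7,32)], [(0,13), (1,37), (7,13)], [(3,20), (4,30), (5,0)], [(0,21), (4,31), (7,24)], [(1,24), (3,0), (6,23)], [(0,2), (2,1), (6,6)], [(4,35), (5,16), (6,25)], [(1,2), (2,30), (5,23)]],
    [[(1,35), (3,7), (7,34)], [(2,35), (4,28), (7,12)], [(2,22), (6,12), (7,29)], [(0,25), (5,35), (6,22)], [(0,30), (2,27), (5,30)], [(1,10), (4,11), (5,4)], [(3,32), (4,6), (6,5)], [(0,14), (1,27), (3,6)]],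
    [[(0,7), (2,14), (3,36)], [(2,13), (4,33), (5,20)], [(3,1), (6,7), (7,16)], [(0,17), (1,18), (4,17)], [(1,26), (3,20), (6,18)], [(1,31), (5,24), (6,20)], [(2,27), (4,13), (7,33)], [(0,9), (5,22), (7,11)]],
    [[(1,14), (6,37), (7,11)], [(2,7), (3,11), (4,28)], [(4,24), (5,38), (6,20)], [(0,21), (3,21), (5,10)], [(1,34), (3,34), (4,2)], [(0,31), (1,9), (6,9)], [(2,9), (5,30), (7,0)], [(0,5), (2,26), (7,16)]],
    [[(4,17), (6,12), (7,4)], [(2,32), (5,34), (6,32)], [(1,24), (6,37), (7,26)], [(0,23), (5,17), (7,0)], [(2,15), (3,16), (4,15)], [(0,15), (1,14), (3,0)], [(1,25), (2,1), (5,36)], [(0,34), (3,11), (4,37)]],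
    [[(0,15), (2,33), (7,8)], [(2,16), (3,30), (4,25)], [(1,7), (5,12), (6,31)], [(2,23), (4,38), (5,29)], [(0,32), (1,29), (7,16)], [(3,17), (4,21), (5,25)], [(3,4), (6,30), (7,18)], [(0,34), (1,27), (6,14)]],
    [[(3,19), (4,30), (7,5)], [(0,34), (3,33), (7,1)], [(0,29), (2,1), (5,19)], [(1,17), (2,24), (7,18)], [(0,27), (2,32), (6,6)], [(1,30), (4,8), (5,36)], [(1,13), (5,17), (6,1)], [(3,14), (4,34), (6,17)]],
    [[(2,26), (3,31), (7,0)], [(0,21), (4,20), (5,22)], [(1,14), (2,0), (6,19)], [(0,1), (3,5), (7,28)], [(1,13), (3,27), (5,27)], [(1,15), (4,37), (6,35)], [(0,23), (6,12), (7,17)], [(2,13), (4,30), (5,29)]],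
    [[(1,14), (2,26), (7,30)], [(3,17), (6,8), (7,19)], [(0,30), (5,8), (6,18)], [(1,31), (3,0), (4,2)], [(1,12), (4,25), (7,23)], [(2,27), (3,7), (5,13)], [(0,29), (2,19), (4,9)], [(0,25), (5,33), (6,37)]],
    [[(0,14), (4,31), (7,38)], [(2,34), (6,16), (7,22)], [(0,7), (4,18), (6,38)], [(1,24), (5,3), (6,0)], [(3,19), (5,23), (7,9)], [(0,0), (1,25), (3,6)], [(1,32), (2,23), (4,8)], [(2,21), (3,32), (5,34)]],
    [[(0,29), (1,35), (5,6)], [(1,21), (6,3), (7,26)], [(3,22), (5,10), (7,1)], [(3,27), (4,17), (5,20)], [(2,27), (3,35), (6,35)], [(0,37), (2,7), (6,13)], [(1,13), (4,34), (7,3)], [(0,9), (2,35), (4,18)]],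
    [[(0,7), (4,11), (5,26)], [(4,18), (5,19), (7,22)], [(2,12), (3,36), (6,26)], [(1,37), (2,14), (6,6)], [(0,32), (1,24), (7,3)], [(1,32), (3,16), (7,38)], [(3,11), (4,16), (6,25)], [(0,18), (2,31), (5,9)]],
    [[(0,17), (2,0), (4,11)], [(3,30), (4,13), (7,31)], [(1,11), (3,14), (5,1)], [(0,16), (5,2), (6,1)], [(0,27), (1,4), (2,31)], [(5,9), (6,36), (7,29)], [(3,16), (4,12), (7,27)], [(1,24), (2,26), (6,17)]],
    [[(0,36), (5,20), (7,14)], [(1,3), (3,22), (4,14)], [(1,2), (3,18), (6,38)], [(0,11), (4,13), (6,6)], [(2,14), (3,8), (5,22)], [(0,19), (4,12), (5,24)], [(1,25), (2,24), (7,9)], [(2,28), (6,25), (7,10)]],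
    [[(2,5), (4,19), (6,27)], [(0,6), (3,4), (6,13)], [(1,9), (3,14), (4,12)], [(5,28), (6,17), (7,7)], [(0,8), (1,8), (5,35)], [(0,28), (1,37), (4,23)], [(2,31), (3,18), (7,12)], [(2,3), (5,30), (7,14)]],
    [[(3,33), (5,27), (7,29)], [(0,21), (2,9), (4,19)], [(0,22), (1,16), (4,3)], [(4,26), (5,8), (7,25)], [(2,37), (3,23), (6,0)], [(1,3), (5,37), (7,27)], [(0,17), (1,38), (6,10)], [(2,35), (3,13), (6,38)]],
    [[(0,23), (2,0), (3,6)], [(1,1), (3,14), (7,26)], [(0,15), (3,1), (5,13)], [(2,22), (4,10), (7,31)], [(4,15), (5,26), (6,0)], [(0,22), (4,38), (6,38)], [(1,38), (5,21), (6,13)], [(1,27), (2,11), (7,21)]],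
    [[(1,0), (2,5), (6,30)], [(3,7), (5,8), (6,20)], [(3,26), (5,9), (7,36)], [(0,14), (2,31), (4,22)], [(1,32), (3,15), (4,12)], [(2,21), (4,8), (6,10)], [(0,24), (1,34), (7,4)], [(0,7), (5,19), (7,29)]]]"

definition qs120 :: "(nat \<times> int) list list" where
  "qs120 = [[(0,33), (1,12), (2,4), (3,14)],
    [(0,15), (3,24), (4,3), (7,4)],
    [(0,9), (4,6), (6,3), (7,23)],
    [(0,0), (1,22), (3,32), (5,14)],
    [(1,6), (2,30), (4,3), (7,25)],
    [(3,4), (4,23), (5,1), (6,15)],
    [(1,38), (2,32), (3,8), (4,33)],
    [(0,9), (3,36), (5,2), (6,35)],
    [(1,17), (2,20), (4,22), (6,29)],
    [(1,22), (3,9), (4,15), (7,26)],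
    [(0,15), (4,5), (5,30), (7,30)],
    [(2,6), (5,16), (6,1), (7,11)],
    [(2,3), (3,24), (5,3), (7,15)],
    [(1,27), (2,1), (5,16), (6,34)],
    [(0,31), (2,20), (5,14), (6,31)],
    [(1,0), (2,29), (6,25), (7,22)],
    [(0,0), (3,8), (6,29), (7,36)],
    [(0,13), (1,0), (4,37), (7,34)],
    [(0,37), (2,35), (5,7), (7,18)],
    [(0,23), (3,30), (4,15), (6,9)],
    [(1,25), (3,32), (5,27), (6,29)],
    [(1,32), (2,3), (4,7), (5,23)]]"

definition cls123 :: "(nat \<times> int) list list list" where
  "cls123 = [[[(0,20), (3,0), (4,28)], [(0,31), (3,26), (5,0)], [(1,5), (6,19), (7,5)], [(1,25), (6,29), (7,31)], [(3,10), (4,9), (7,15)], [(2,8), (4,17), (6,33)], [(0,3), (2,16), (5,29)], [(1,9), (2,6), (5,1)]],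
    [[(0,1), (4,12), (6,4)], [(1,36), (3,33), (5,24)], [(1,11), (2,7), (3,7)], [(0,23), (4,1), (6,30)], [(1,25), (2,8), (7,3)], [(2,9), (5,11), (7,31)], [(3,23), (6,23), (7,26)], [(0,27), (4,32), (5,22)]],
    [[(2,24), (5,11), (6,27)], [(0,14), (1,10), (2,28)], [(3,20), (5,18), (7,21)], [(0,1), (4,28), (7,8)], [(3,36), (4,27), (6,11)], [(2,2), (6,37), (7,28)], [(0,33), (1,9), (3,37)], [(1,5), (4,14), (5,10)]],
    [[(1,29), (3,22), (7,18)], [(0,23), (2,12), (7,31)], [(0,27), (2,38), (4,37)], [(3,23), (5,32), (6,13)], [(1,34), (3,0), (7,26)], [(2,1), (4,24), (5,30)], [(0,37), (5,37), (6,24)], [(1,27), (4,26), (6,17)]],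
    [[(1,29), (3,17), (7,28)], [(0,33), (1,16), (6,2)], [(3,19), (4,38), (6,16)], [(2,34), (4,3), (6,6)], [(2,26), (4,28), (5,8)], [(2,0), (5,33), (7,17)], [(0,5), (1,9), (7,18)], [(0,16), (3,27), (5,31)]],
    [[(2,4), (5,2), (6,23)], [(1,1), (4,29), (7,5)], [(3,18), (4,12), (7,16)], [(0,9), (2,27), (6,22)], [(0,8), (3,16), (5,12)], [(0,19), (6,15), (7,36)], [(1,17), (2,2), (4,13)], [(1,24), (3,14), (5,31)]],
    [[(0,28), (1,18), (4,30)], [(3,8), (4,16), (5,30)], [(2,11), (5,26), (6,21)], [(0,17), (1,38), (6,26)], [(3,1), (4,8), (7,37)], [(1,31), (2,34), (7,5)], [(0,36), (2,24), (7,12)], [(3,27), (5,37), (6,4)]],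
    [[(2,26), (5,37), (7,17)], [(4,37), (6,33), (7,0)], [(1,12), (3,32), (4,5)], [(0,27), (4,33), (7,19)], [(1,34), (2,3), (3,21)], [(0,4), (3,16), (6,38)], [(0,23), (2,10), (5,14)], [(1,5), (5,9), (6,28)]],
    [[(2,36), (3,28), (4,12)], [(4,7), (5,37), (6,34)], [(2,38), (4,35), (7,10)], [(1,4), (5,29), (7,26)], [(0,12), (2,34), (3,6)], [(0,2), (1,29), (3,20)], [(0,31), (5,27), (6,36)], [(1,33), (6,38), (7,15)]],
    [[(2,27), (3,12), (6,20)], [(4,22), (6,21), (7,21)], [(1,21), (3,16), (5,0)], [(0,25), (3,17), (7,35)], [(0,33), (2,32), (5,35)], [(1,34), (5,37), (7,10)], [(0,17), (2,34), (4,29)], [(1,32), (4,15), (6,28)]],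
    [[(2,2), (6,20), (7,25)], [(2,24), (3,29), (5,23)], [(0,24), (2,4), (5,10)], [(1,22), (6,0), (7,20)], [(0,2), (1,14), (4,11)], [(3,1), (4,36), (7,33)], [(0,22), (3,9), (6,19)], [(1,15), (4,31), (5,12)]],
    [[(2,1), (5,1), (6,15)], [(0,11), (4,14), (7,35)], [(2,14), (3,2), (7,18)], [(2,0), (4,25), (7,16)], [(0,25), (1,34), (5,30)], [(0,24), (1,11), (4,21)], [(1,6), (3,27), (6,25)], [(3,25), (5,26), (6,11)]],
    [[(0,33), (3,22), (7,17)], [(3,6), (6,23), (7,19)], [(4,34), (5,38), (6,0)], [(1,3), (2,8), (4,32)], [(0,22), (1,29), (5,7)], [(0,20), (1,25), (2,36)], [(5,12), (6,4), (7,21)], [(2,37), (3,11), (4,15)]],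
    [[(0,12), (1,25), (7,2)], [(1,32), (3,9), (6,1)], [(2,29), (4,29), (7,30)], [(0,13), (2,16), (4,12)], [(3,31), (5,30), (7,25)], [(0,38), (4,19), (6,0)], [(1,21), (2,21), (5,37)], [(3,32), (5,8), (6,2)]],
    [[(2,8), (4,24), (7,29)], [(0,13), (3,6), (5,12)], [(1,5), (5,11), (7,1)], [(2,3), (4,29), (6,33)], [(0,32), (1,31), (6,10)], [(3,10), (4,7), (6,17)], [(0,18), (1,24), (7,15)], [(2,13), (3,20), (5,31)]],
    [[(0,2), (2,3), (3,24)], [(2,32), (3,29), (6,34)], [(0,16), (3,31), (7,14)], [(1,14), (4,14), (5,35)], [(1,4), (5,6), (6,2)], [(0,30), (4,15), (5,4)], [(4,16), (6,18), (7,1)], [(1,3), (2,1), (7,30)]],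
    [[(0,8), (3,35), (6,2)], [(3,33), (5,19), (7,4)], [(1,37), (5,35), (6,1)], [(0,16), (1,8), (2,1)], [(0,15), (4,28), (7,35)], [(4,6), (5,9), (6,24)], [(1,36), (2,26), (4,38)], [(2,21), (3,37), (7,18)]],
    [[(0,8), (5,37), (6,20)], [(1,16), (4,3), (6,37)], [(1,17), (4,22), (7,3)], [(0,1), (2,22), (6,3)], [(1,9), (3,21), (4,32)], [(2,32), (3,38), (7,7)], [(2,3), (3,4), (5,35)], [(0,3), (5,12), (7,5)]],
    [[(0,11), (1,8), (3,16)], [(2,19), (3,15), (7,32)], [(4,5), (5,15), (7,31)], [(0,0), (3,17), (7,6)], [(1,1), (2,2), (6,35)], [(0,1), (5,32), (6,22)], [(1,15), (2,36), (4,28)], [(4,24), (5,10), (6,21)]],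
    [[(2,34), (3,27), (4,13)], [(0,29), (2,27), (6,19)], [(0,3), (3,2), (7,6)], [(0,16), (1,18), (3,25)], [(1,32), (5,26), (6,33)], [(1,19), (2,14), (5,6)], [(4,30), (6,38), (7,7)], [(4,23), (5,1), (7,2)]],
    [[(0,15), (3,21), (6,25)], [(1,37), (2,0), (5,28)], [(0,25), (2,22), (4,16)], [(5,32), (6,18), (7,37)], [(2,14), (6,29), (7,23)], [(4,23), (5,6), (7,6)], [(0,29), (1,20), (3,26)], [(1,12), (3,13), (4,18)]],
    [[(1,38), (2,16), (4,29)], [(2,0), (3,23), (5,35)], [(1,31), (3,6), (7,33)], [(3,19), (4,4), (6,15)], [(0,36), (5,19), (7,29)], [(2,29), (5,9), (7,37)], [(0,31), (4,21), (6,35)], [(0,23), (1,0), (6,16)]],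
    [[(3,21), (5,14), (7,6)], [(0,23), (5,24), (6,2)], [(4,7), (5,22), (7,20)], [(3,2), (4,17), (7,1)], [(0,31), (1,3), (2,31)], [(1,17), (2,30), (6,37)], [(2,29), (3,37), (4,18)], [(0,30), (1,31), (6,30)]],
    [[(0,22), (4,26), (5,0)], [(1,8), (2,27), (7,34)], [(2,19), (6,7), (7,17)], [(3,20), (4,18), (5,17)], [(2,38), (3,21), (6,3)], [(0,21), (1,15), (5,10)], [(0,26), (3,16), (4,19)], [(1,4), (6,14), (7,9)]],
    [[(1,22), (3,32), (5,32)], [(1,32), (2,8), (4,14)], [(0,15), (3,18), (6,13)], [(2,37), (4,27), (5,15)], [(0,17), (6,5), (7,18)], [(1,9), (3,34), (6,15)], [(2,12), (4,16), (7,4)], [(0,37), (5,4), (7,17)]],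
    [[(3,20), (6,22), (7,34)], [(1,10), (2,19), (6,17)], [(1,6), (4,10), (5,21)], [(2,23), (5,35), (7,2)], [(1,2), (3,25), (4,35)], [(0,20), (4,21), (6,6)], [(0,33), (3,24), (5,13)], [(0,16), (2,12), (7,15)]],
    [[(4,13), (6,14), (7,7)], [(2,24), (3,15), (6,30)], [(0,34), (1,13), (4,21)], [(1,12), (5,11), (7,2)], [(0,5), (1,29), (5,19)], [(3,8), (4,26), (7,15)], [(2,35), (3,22), (5,36)], [(0,30), (2,1), (6,13)]],
    [[(0,3), (1,28), (7,12)], [(2,25), (3,23), (4,16)], [(1,20), (5,28), (6,7)], [(2,29), (4,30), (5,14)], [(0,38), (2,6), (7,11)], [(3,34), (4,17), (5,15)], [(3,6), (6,33), (7,37)], [(0,34), (1,18), (6,11)]],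
    [[(0,34), (3,15), (6,33)], [(3,29), (4,3), (7,11)], [(0,2), (2,25), (5,0)], [(1,1), (2,15), (4,20)], [(5,37), (6,26), (7,33)], [(0,36), (2,29), (7,31)], [(1,5), (5,14), (6,7)], [(1,33), (3,16), (4,25)]],
    [[(0,30), (3,15), (7,30)], [(0,26), (4,12), (6,10)], [(2,21), (3,16), (6,3)], [(2,34), (3,23), (7,7)], [(1,38), (4,14), (5,22)], [(1,19), (4,22), (5,38)], [(0,13), (1,27), (7,38)], [(2,26), (5,33), (6,35)]],
    [[(1,18), (5,11), (7,28)], [(4,17), (6,32), (7,29)], [(1,1), (3,16), (5,21)], [(2,3), (3,5), (4,6)], [(0,27), (4,22), (7,15)], [(0,14), (2,19), (3,0)], [(1,35), (5,10), (6,9)], [(0,28), (2,20), (6,4)]],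
    [[(3,4), (4,6), (5,11)], [(3,26), (4,13), (6,0)], [(0,28), (6,13), (7,0)], [(0,38), (4,38), (6,5)], [(1,37), (2,29), (5,10)], [(0,9), (5,6), (7,13)], [(1,32), (2,19), (3,36)], [(1,9), (2,3), (7,23)]],
    [[(1,33), (6,3), (7,12)], [(0,13), (3,34), (5,24)], [(0,12), (4,34), (6,4)], [(0,26), (2,2), (5,10)], [(2,21), (3,11), (4,3)], [(1,38), (2,22), (6,11)], [(1,10), (4,17), (7,34)], [(3,24), (5,11), (7,26)]],
    [[(0,30), (4,12), (5,24)], [(3,15), (6,6), (7,24)], [(4,11), (5,20), (7,14)], [(0,14), (1,9), (4,10)], [(0,37), (1,37), (7,31)], [(1,23), (2,29), (3,2)], [(2,10), (5,7), (6,11)], [(2,30), (3,10), (6,13)]],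
    [[(0,37), (2,6), (4,26)], [(3,19), (4,7), (7,38)], [(5,34), (6,7), (7,6)], [(5,14), (6,24), (7,16)], [(0,24), (2,14), (6,38)], [(1,29), (3,3), (5,30)], [(1,10), (3,29), (4,24)], [(0,14), (1,24), (2,34)]],
    [[(0,12), (6,1), (7,30)], [(1,22), (3,14), (4,20)], [(1,15), (3,13), (6,6)], [(0,4), (4,19), (5,16)], [(2,7), (3,6), (5,30)], [(0,11), (5,38), (7,25)], [(2,2), (4,24), (7,35)], [(1,8), (2,24), (6,32)]],
    [[(4,30), (5,15), (6,23)], [(3,30), (5,32), (7,20)], [(2,27), (3,31), (6,4)], [(2,19), (6,24), (7,12)], [(0,7), (1,0), (3,17)], [(0,36), (1,16), (4,4)], [(1,5), (4,23), (5,16)], [(0,26), (2,32), (7,31)]],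
    [[(1,8), (2,15), (7,15)], [(1,9), (2,34), (6,24)], [(1,37), (3,31), (6,20)], [(4,5), (5,6), (7,14)], [(0,13), (2,38), (3,9)], [(4,1), (5,34), (6,22)], [(0,8), (4,0), (7,34)], [(0,30), (3,32), (5,11)]],
    [[(0,18), (2,13), (3,16)], [(1,31), (5,31), (6,31)], [(0,8), (2,12), (3,21)], [(1,15), (2,14), (7,10)], [(4,24), (5,11), (6,24)], [(4,17), (5,9), (7,27)], [(4,25), (6,8), (7,23)], [(0,34), (1,32), (3,2)]],
    [[(2,1), (4,38), (6,27)], [(0,2), (3,25), (5,5)], [(0,25), (2,27), (5,18)], [(1,22), (6,11), (7,25)], [(1,30), (3,32), (7,38)], [(2,29), (4,9), (6,28)], [(0,0), (1,20), (7,21)], [(3,36), (4,13), (5,31)]],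
    [[(0,8), (5,18), (7,4)], [(2,38), (4,9), (5,4)], [(1,34), (2,7), (5,17)], [(1,9), (3,9), (6,3)], [(3,29), (4,19), (6,13)], [(0,22), (4,38), (7,38)], [(1,20), (2,24), (7,0)], [(0,15), (3,16), (6,35)]]]"

definition qs123 :: "(nat \<times> int) list list" where
  "qs123 = [[(1,24), (2,15), (3,9), (7,21)],
    [(2,35), (3,11), (4,28), (6,35)],
    [(1,17), (3,20), (4,34), (5,2)],
    [(1,2), (2,29), (5,15), (7,14)],
    [(2,7), (3,32), (6,4), (7,32)],
    [(2,5), (3,19), (5,27), (6,18)],
    [(0,29), (1,37), (4,23), (6,9)],
    [(0,36), (1,14), (3,13), (4,34)],
    [(0,5), (1,33), (2,14), (4,28)],
    [(1,28), (4,13), (6,25), (7,9)],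
    [(0,0), (2,12), (4,19), (5,21)],
    [(0,26), (2,20), (6,37), (7,9)],
    [(3,32), (5,35), (6,33), (7,18)],
    [(0,36), (5,4), (6,27), (7,25)],
    [(0,37), (2,28), (4,16), (5,16)],
    [(0,19), (1,22), (3,33), (4,33)],
    [(0,12), (3,12), (5,28), (7,3)],
    [(1,2), (5,30), (6,33), (7,34)]]"

definition cls126 :: "(nat \<times> int) list list list" where
  "cls126 = [[[(0,28), (3,35), (6,25)], [(0,12), (2,14), (5,4)], [(1,14), (4,20), (6,36)], [(1,7), (4,7), (7,23)], [(2,6), (3,30), (7,30)], [(4,27), (6,20), (7,13)], [(0,11), (3,37), (5,27)], [(1,12), (2,25), (5,26)]],
    [[(0,24), (1,7), (6,17)], [(1,11), (3,25), (7,3)], [(2,35), (4,1), (7,19)], [(0,26), (2,13), (6,9)], [(1,9), (2,21), (7,26)], [(3,6), (4,36), (5,16)], [(4,32), (5,18), (6,13)], [(0,34), (3,29), (5,38)]],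
    [[(1,20), (2,7), (6,8)], [(0,29), (1,18), (3,17)], [(0,10), (2,27), (5,38)], [(3,22), (4,21), (6,4)], [(4,32), (5,9), (7,24)], [(1,1), (2,2), (5,7)], [(0,24), (3,30), (7,1)], [(4,37), (6,24), (7,11)]],
    [[(1,24), (5,34), (7,6)], [(0,8), (2,30), (7,29)], [(0,4), (1,17), (6,22)], [(3,23), (5,21), (6,32)], [(1,22), (3,13), (7,7)], [(2,32), (3,0), (4,5)], [(0,3), (4,3), (5,20)], [(2,28), (4,13), (6,30)]],
    [[(3,11), (6,8), (7,3)], [(0,24), (1,18), (5,30)], [(4,20), (5,23), (6,24)], [(2,8), (3,25), (4,9)], [(3,21), (4,19), (6,31)], [(2,7), (5,37), (7,26)], [(0,20), (1,38), (7,4)], [(0,37), (1,34), (2,9)]],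
    [[(0,9), (2,32), (6,24)], [(1,2), (4,15), (7,3)], [(3,17), (4,13), (7,25)], [(2,0), (4,8), (5,21)], [(0,29), (3,19), (5,8)], [(0,31), (3,6), (7,5)], [(1,10), (2,4), (6,23)], [(1,21), (5,22), (6,37)]],
    [[(1,13), (3,6), (4,24)], [(0,11), (2,21), (5,38)], [(0,15), (2,8), (6,29)], [(1,8), (6,16), (7,19)], [(2,13), (3,7), (7,2)], [(0,22), (4,8), (7,27)], [(1,24), (5,9), (6,33)], [(3,5), (4,19), (5,31)]],
    [[(2,26), (5,21), (7,0)], [(0,22), (2,12), (4,32)], [(1,31), (3,23), (5,22)], [(3,0), (6,38), (7,29)], [(1,9), (2,1), (3,16)], [(0,0), (4,27), (6,9)], [(0,38), (4,34), (6,25)], [(1,26), (5,5), (7,28)]],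
    [[(2,13), (4,2), (7,35)], [(0,33), (1,0), (6,38)], [(2,9), (4,4), (7,15)], [(1,17), (4,27), (5,25)], [(0,22), (2,26), (5,5)], [(0,5), (1,28), (3,2)], [(3,28), (5,21), (6,21)], [(3,15), (6,10), (7,4)]],
    [[(3,3), (4,22), (5,21)], [(2,25), (4,35), (6,31)], [(1,19), (2,2), (3,13)], [(1,0), (3,17), (7,32)], [(0,31), (5,32), (7,12)], [(0,3), (2,30), (5,1)], [(0,2), (6,35), (7,19)], [(1,38), (4,27), (6,27)]],
    [[(2,26), (6,3), (7,13)], [(2,36), (3,20), (5,0)], [(0,32), (6,13), (7,3)], [(1,11), (2,34), (5,10)], [(1,19), (4,14), (7,29)], [(0,3), (3,12), (4,24)], [(0,1), (1,33), (3,16)], [(4,16), (5,23), (6,26)]],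
    [[(1,32), (5,36), (6,35)], [(0,38), (4,18), (7,23)], [(2,38), (3,7), (5,13)], [(0,24), (3,3), (7,15)], [(1,16), (4,13), (7,4)], [(0,28), (2,27), (4,17)], [(3,17), (5,11), (6,28)], [(1,6), (2,22), (6,30)]],
    [[(0,14), (5,13), (7,12)], [(1,13), (3,9), (6,3)], [(2,35), (4,33), (5,2)], [(1,29), (4,11), (6,22)], [(4,34), (5,0), (7,32)], [(0,3), (1,18), (2,27)], [(3,7), (6,35), (7,10)], [(0,31), (2,34), (3,29)]],
    [[(1,19), (2,27), (7,22)], [(0,19), (1,17), (4,34)], [(2,7), (6,0), (7,18)], [(2,35), (3,32), (4,17)], [(0,33), (3,15), (4,3)], [(0,17), (5,38), (6,17)], [(1,12), (5,12), (6,10)], [(3,22), (5,19), (7,20)]],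
    [[(1,23), (2,25), (7,6)], [(5,21), (6,18), (7,7)], [(1,34), (4,33), (5,20)], [(2,12), (4,26), (6,11)], [(0,36), (5,4), (7,26)], [(0,5), (3,15), (6,28)], [(0,4), (1,3), (3,4)], [(2,38), (3,17), (4,34)]],
    [[(1,2), (3,11), (5,25)], [(0,18), (3,31), (7,27)], [(4,24), (6,3), (7,38)], [(2,25), (5,24), (6,20)], [(1,12), (5,32), (6,13)], [(0,13), (2,27), (4,5)], [(0,26), (3,6), (4,1)], [(1,28), (2,8), (7,22)]],
    [[(2,5), (3,31), (5,7)], [(3,9), (5,36), (7,30)], [(1,32), (5,14), (6,7)], [(0,21), (1,16), (4,19)], [(4,27), (6,17), (7,14)], [(0,17), (2,9), (6,21)], [(1,27), (2,34), (4,17)], [(0,13), (3,38), (7,13)]],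
    [[(0,17), (2,29), (3,22)], [(1,35), (4,5), (7,25)], [(4,3), (5,14), (6,2)], [(0,0), (5,3), (6,16)], [(1,12), (3,9), (4,19)], [(2,16), (3,29), (7,6)], [(0,28), (2,36), (6,24)], [(1,28), (5,37), (7,14)]],
    [[(3,6), (5,27), (7,25)], [(2,5), (3,4), (7,8)], [(4,11), (5,11), (7,21)], [(0,18), (1,14), (3,29)], [(1,19), (2,1), (6,38)], [(0,26), (2,15), (6,24)], [(0,16), (1,24), (4,9)], [(4,31), (5,7), (6,19)]],
    [[(3,6), (4,32), (6,12)], [(1,32), (2,10), (6,10)], [(0,29), (4,30), (5,26)], [(0,3), (3,25), (7,22)], [(1,24), (6,8), (7,24)], [(1,4), (2,33), (5,33)], [(0,4), (3,8), (5,13)], [(2,26), (4,13), (7,20)]],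
    [[(3,16), (4,5), (6,14)], [(0,10), (1,27), (5,25)], [(0,20), (2,14), (3,23)], [(2,22), (6,36), (7,18)], [(5,29), (6,19), (7,17)], [(2,30), (4,18), (5,15)], [(1,8), (3,33), (7,7)], [(0,24), (1,16), (4,7)]],
    [[(1,14), (2,9), (4,22)], [(0,38), (5,11), (7,11)], [(1,27), (3,15), (6,3)], [(3,13), (4,21), (6,16)], [(0,6), (3,14), (5,30)], [(2,14), (5,1), (7,7)], [(0,1), (1,13), (2,10)], [(4,23), (6,20), (7,12)]],
    [[(2,16), (3,4), (4,19)], [(0,7), (5,7), (6,14)], [(3,8), (4,12), (7,34)], [(2,15), (5,11), (7,15)], [(0,23), (1,9), (2,29)], [(1,38), (3,15), (6,33)], [(4,38), (5,30), (7,8)], [(0,24), (1,34), (6,34)]],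
    [[(0,30), (4,2), (7,26)], [(1,28), (2,34), (5,20)], [(2,0), (6,25), (7,27)], [(0,35), (5,19), (6,23)], [(2,8), (3,11), (5,24)], [(0,34), (1,21), (4,1)], [(3,28), (4,21), (6,15)], [(1,26), (3,24), (7,10)]],
    [[(0,3), (1,4), (3,38)], [(1,27), (2,23), (4,20)], [(3,25), (4,6), (5,8)], [(1,26), (2,37), (4,7)], [(0,8), (6,19), (7,0)], [(3,0), (5,31), (6,0)], [(2,30), (6,20), (7,28)], [(0,25), (5,12), (7,32)]],
    [[(1,9), (6,0), (7,13)], [(2,37), (3,18), (6,22)], [(1,2), (4,35), (5,28)], [(2,15), (3,17), (5,8)], [(1,19), (3,22), (7,6)], [(0,18), (4,21), (5,12)], [(0,26), (4,7), (6,38)], [(0,1), (2,8), (7,5)]],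
    [[(0,32), (4,10), (7,7)], [(1,0), (3,6), (6,18)], [(0,18), (1,38), (6,35)], [(0,34), (3,25), (5,20)], [(2,2), (5,22), (7,18)], [(3,5), (4,21), (7,23)], [(1,25), (2,10), (5,18)], [(2,36), (4,35), (6,10)]],
    [[(0,27), (1,38), (7,14)], [(2,36), (3,18), (4,15)], [(0,20), (1,25), (6,12)], [(3,14), (4,4), (5,22)], [(0,37), (2,17), (7,34)], [(2,31), (3,4), (4,11)], [(5,9), (6,11), (7,33)], [(1,9), (5,14), (6,1)]],
    [[(0,35), (3,8), (4,9)], [(3,36), (6,2), (7,2)], [(0,30), (1,30), (2,16)], [(2,35), (4,11), (5,32)], [(1,13), (5,16), (6,25)], [(0,10), (2,6), (7,37)], [(5,36), (6,18), (7,6)], [(1,8), (3,28), (4,34)]],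
    [[(2,20), (3,36), (7,27)], [(0,22), (4,12), (6,17)], [(2,30), (3,1), (5,4)], [(0,30), (3,14), (7,2)], [(0,26), (1,30), (6,12)], [(1,23), (4,37), (5,18)], [(1,7), (4,29), (7,19)], [(2,25), (5,5), (6,19)]],
    [[(1,13), (2,18), (7,20)], [(4,14), (6,22), (7,7)], [(0,3), (2,1), (6,6)], [(2,35), (3,31), (4,3)], [(1,27), (4,25), (7,33)], [(0,16), (3,5), (5,6)], [(1,11), (3,15), (5,26)], [(0,29), (5,1), (6,11)]],
    [[(4,35), (5,0), (7,13)], [(3,10), (6,27), (7,3)], [(0,6), (4,0), (6,25)], [(0,17), (1,2), (6,8)], [(2,22), (3,26), (5,11)], [(1,25), (5,13), (7,20)], [(1,36), (2,12), (4,28)], [(0,25), (2,2), (3,27)]],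
    [[(1,31), (3,11), (4,32)], [(3,1), (6,25), (7,3)], [(0,23), (4,28), (5,3)], [(0,4), (2,25), (4,27)], [(1,38), (2,26), (3,27)], [(2,9), (5,7), (6,26)], [(0,21), (1,30), (7,10)], [(5,38), (6,24), (7,35)]],
    [[(0,2), (4,1), (5,34)], [(4,3), (5,30), (7,38)], [(3,30), (6,10), (7,15)], [(0,36), (1,11), (4,38)], [(0,34), (1,16), (7,13)], [(1,27), (2,20), (3,11)], [(2,7), (5,11), (6,17)], [(2,21), (3,4), (6,24)]],
    [[(0,38), (4,6), (7,5)], [(2,22), (3,20), (4,14)], [(5,29), (6,18), (7,19)], [(5,3), (6,8), (7,15)], [(0,33), (1,10), (2,9)], [(1,11), (3,16), (5,28)], [(1,21), (3,3), (4,25)], [(0,13), (2,8), (6,19)]],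
    [[(0,24), (6,37), (7,17)], [(1,37), (3,0), (5,20)], [(2,19), (3,38), (6,0)], [(0,31), (4,28), (7,34)], [(1,0), (3,10), (6,2)], [(0,23), (4,35), (5,25)], [(1,5), (2,9), (7,18)], [(2,32), (4,18), (5,24)]],
    [[(1,30), (4,9), (6,24)], [(0,6), (3,26), (5,26)], [(2,6), (3,12), (6,34)], [(2,32), (6,11), (7,23)], [(0,22), (1,2), (5,13)], [(0,20), (4,38), (7,3)], [(1,34), (3,7), (4,7)], [(2,25), (5,9), (7,1)]],
    [[(3,5), (5,30), (7,12)], [(1,16), (2,19), (6,23)], [(0,27), (1,17), (6,28)], [(4,33), (5,4), (7,34)], [(0,2), (2,20), (3,34)], [(0,13), (3,30), (5,8)], [(2,18), (4,11), (6,9)], [(1,24), (4,10), (7,5)]],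
    [[(0,17), (1,24), (4,8)], [(3,0), (6,2), (7,6)], [(0,24), (2,15), (5,37)], [(1,14), (2,32), (7,5)], [(3,11), (6,36), (7,22)], [(4,28), (5,11), (6,34)], [(1,16), (3,16), (5,18)], [(0,4), (2,1), (4,12)]],
    [[(2,8), (4,8), (6,31)], [(3,13), (5,20), (6,36)], [(0,8), (3,24), (7,7)], [(0,15), (1,17), (2,15)], [(1,19), (4,24), (7,8)], [(2,10), (4,16), (6,17)], [(0,37), (5,3), (7,6)], [(1,21), (3,32), (5,28)]],
    [[(0,4), (5,14), (7,19)], [(2,10), (4,33), (5,22)], [(1,15), (2,6), (7,24)], [(1,11), (3,29), (6,36)], [(3,22), (4,35), (6,37)], [(0,9), (3,33), (4,25)], [(1,7), (2,35), (5,3)], [(0,29), (6,14), (7,23)]],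
    [[(0,24), (1,15), (3,23)], [(1,7), (4,9), (5,4)], [(2,31), (3,36), (4,22)], [(2,8), (3,37), (7,18)], [(0,37), (5,12), (7,38)], [(0,8), (1,11), (6,7)], [(2,27), (6,14), (7,13)], [(4,29), (5,14), (6,36)]]]"

definition qs126 :: "(nat \<times> int) list list" where
  "qs126 = [[(0,3), (2,8), (3,36), (6,5)],
    [(0,27), (2,1), (6,16), (7,22)],
    [(1,33), (2,33), (5,27), (7,2)],
    [(1,26), (3,13), (4,22), (7,22)],
    [(0,7), (4,33), (5,3), (6,36)],
    [(0,0), (2,20), (4,24), (5,8)],
    [(1,37), (3,22), (5,26), (6,18)],
    [(0,10), (1,37), (4,14), (7,35)],
    [(1,37), (4,13), (5,14), (7,16)],
    [(1,6), (2,16), (5,25), (7,20)],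
    [(0,14), (2,15), (3,15), (7,16)],
    [(0,38), (3,30), (4,33), (6,7)],
    [(1,29), (3,19), (5,3), (6,33)],
    [(2,24), (3,16), (4,18), (6,7)]]"

definition cls129 :: "(nat \<times> int) list list list" where
  "cls129 = [[[(0,21), (3,13), (7,29)], [(0,35), (3,20), (6,26)], [(2,17), (4,23), (6,12)], [(4,34), (6,31), (7,7)], [(1,7), (2,13), (3,12)], [(4,15), (5,31), (7,3)], [(0,10), (1,33), (5,18)], [(1,11), (2,9), (5,11)]],
    [[(0,10), (4,6), (6,16)], [(1,8), (3,35), (4,19)], [(1,13), (3,3), (7,26)], [(0,36), (4,26), (6,29)], [(2,2), (5,8), (7,34)], [(2,24), (5,10), (7,6)], [(3,22), (5,15), (6,0)], [(0,23), (1,15), (2,25)]],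
    [[(0,21), (1,2), (2,7)], [(1,37), (2,32), (3,19)], [(3,6), (4,36), (5,15)], [(0,17), (3,23), (6,30)], [(4,20), (5,8), (7,25)], [(4,16), (6,22), (7,5)], [(0,31), (1,36), (5,28)], [(2,24), (6,38), (7,30)]],
    [[(1,32), (2,26), (7,31)], [(1,36), (5,15), (7,17)], [(0,38), (3,10), (4,2)], [(5,34), (6,26), (7,24)], [(2,4), (3,27), (4,1)], [(0,18), (2,3), (6,28)], [(0,7), (3,11), (5,38)], [(1,19), (4,12), (6,36)]],
    [[(1,13), (4,16), (7,23)], [(0,17), (3,18), (7,4)], [(2,38), (3,35), (6,8)], [(0,15), (3,13), (5,10)], [(4,23), (5,36), (6,9)], [(1,17), (2,31), (6,16)], [(0,13), (1,15), (7,15)], [(2,36), (4,36), (5,11)]],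
    [[(0,15), (2,5), (5,16)], [(1,11), (4,28), (7,25)], [(4,3), (5,35), (7,32)], [(1,24), (2,24), (4,11)], [(0,28), (3,33), (5,9)], [(0,14), (3,4), (6,4)], [(1,16), (2,1), (6,17)], [(3,23), (6,24), (7,27)]],
    [[(0,16), (3,34), (4,11)], [(0,36), (1,5), (5,14)], [(2,14), (4,28), (6,27)], [(1,34), (5,21), (6,29)], [(1,21), (3,29), (5,10)], [(0,38), (2,7), (7,33)], [(2,21), (6,4), (7,28)], [(3,18), (4,27), (7,38)]],
    [[(1,14), (2,4), (3,38)], [(0,12), (4,9), (7,35)], [(1,30), (3,16), (5,10)], [(4,17), (6,18), (7,34)], [(1,19), (2,32), (5,21)], [(0,37), (3,6), (6,16)], [(0,32), (4,10), (7,33)], [(2,12), (5,5), (6,8)]],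
    [[(2,29), (3,27), (6,2)], [(0,26), (5,20), (6,7)], [(2,24), (3,17), (4,32)], [(1,5), (5,15), (7,7)], [(0,34), (2,37), (3,4)], [(0,12), (1,10), (7,5)], [(4,10), (5,1), (6,18)], [(1,9), (4,27), (7,30)]],
    [[(0,16), (2,11), (4,10)], [(4,26), (5,31), (6,7)], [(2,3), (3,25), (5,29)], [(1,16), (3,18), (6,29)], [(0,8), (2,4), (5,12)], [(0,27), (1,14), (7,23)], [(4,27), (6,9), (7,37)], [(1,0), (3,14), (7,27)]],
    [[(0,34), (2,7), (5,23)], [(1,34), (3,32), (7,21)], [(0,24), (4,8), (6,13)], [(1,15), (4,13), (6,30)], [(1,2), (4,6), (5,13)], [(2,30), (3,6), (7,5)], [(2,17), (5,36), (6,17)], [(0,32), (3,10), (7,4)]],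
    [[(0,32), (6,34), (7,35)], [(0,34), (4,1), (7,16)], [(3,7), (5,12), (7,18)], [(0,6), (1,38), (2,20)], [(1,28), (3,24), (4,27)], [(2,0), (5,7), (6,21)], [(3,20), (4,26), (5,32)], [(1,18), (2,4), (6,23)]],
    [[(0,28), (3,30), (5,19)], [(3,14), (6,1), (7,35)], [(2,15), (4,4), (5,24)], [(1,38), (2,11), (4,23)], [(0,3), (1,13), (7,7)], [(1,21), (3,13), (6,2)], [(0,8), (5,20), (7,27)], [(2,16), (4,0), (6,33)]],
    [[(0,32), (1,31), (7,20)], [(1,18), (3,31), (5,9)], [(2,18), (6,23), (7,31)], [(0,31), (4,16), (5,8)], [(2,38), (3,23), (4,24)], [(0,0), (2,13), (4,8)], [(1,23), (3,30), (6,27)], [(5,4), (6,22), (7,9)]],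
    [[(0,1), (2,24), (4,6)], [(0,21), (5,26), (6,33)], [(1,31), (4,31), (5,25)], [(1,18), (2,26), (6,34)], [(3,38), (5,0), (7,30)], [(3,37), (6,17), (7,16)], [(0,11), (1,5), (7,8)], [(2,19), (3,30), (4,38)]],
    [[(2,12), (3,3), (5,33)], [(0,1), (2,8), (7,0)], [(3,37), (6,16), (7,4)], [(0,17), (4,33), (7,35)], [(1,3), (5,20), (6,14)], [(1,2), (4,25), (6,21)], [(0,0), (2,16), (4,26)], [(1,28), (3,11), (5,10)]],
    [[(3,28), (5,5), (6,10)], [(3,5), (4,5), (5,1)], [(1,5), (2,25), (4,19)], [(0,30), (1,36), (4,30)], [(2,33), (6,9), (7,16)], [(0,23), (1,1), (6,38)], [(0,1), (2,5), (7,38)], [(3,15), (5,15), (7,0)]],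
    [[(2,27), (3,1), (7,3)], [(1,26), (4,7), (6,26)], [(4,36), (5,22), (7,16)], [(0,30), (2,23), (6,33)], [(1,19), (3,36), (5,26)], [(0,25), (2,19), (3,8)], [(0,5), (5,18), (6,22)], [(1,3), (4,5), (7,38)]],
    [[(0,34), (5,14), (7,17)], [(2,34), (3,2), (7,36)], [(4,15), (5,0), (7,37)], [(0,21), (1,12), (3,1)], [(1,20), (2,17), (6,7)], [(2,36), (3,36), (6,27)], [(0,29), (1,25), (4,11)], [(4,10), (5,31), (6,32)]],
    [[(3,27), (4,9), (6,1)], [(3,11), (5,33), (7,8)], [(0,15), (5,38), (6,24)], [(0,19), (1,23), (4,5)], [(1,4), (2,8), (7,36)], [(1,21), (5,34), (6,29)], [(2,12), (4,28), (7,7)], [(0,2), (2,19), (3,28)]],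
    [[(0,19), (4,31), (6,35)], [(1,5), (4,20), (5,21)], [(0,38), (3,26), (5,1)], [(3,27), (6,21), (7,18)], [(2,32), (6,31), (7,4)], [(2,1), (5,23), (7,2)], [(1,16), (3,10), (4,24)], [(0,24), (1,6), (2,15)]],
    [[(1,7), (2,10), (4,13)], [(0,3), (3,13), (4,17)], [(1,27), (3,26), (6,34)], [(3,27), (5,35), (7,34)], [(5,34), (6,23), (7,29)], [(2,2), (5,6), (7,21)], [(0,7), (1,29), (2,12)], [(0,17), (4,27), (6,0)]],
    [[(2,31), (5,32), (6,29)], [(0,11), (3,6), (6,30)], [(1,35), (3,35), (4,31)], [(4,14), (5,1), (7,20)], [(0,27), (1,12), (2,3)], [(2,32), (5,6), (7,28)], [(3,10), (4,9), (7,0)], [(0,7), (1,4), (6,7)]],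
    [[(0,10), (3,25), (5,32)], [(1,8), (5,16), (7,32)], [(2,11), (6,17), (7,34)], [(0,23), (2,33), (6,30)], [(0,36), (2,19), (4,17)], [(1,7), (4,16), (5,6)], [(3,20), (4,9), (6,4)], [(1,3), (3,18), (7,21)]],
    [[(0,23), (6,15), (7,17)], [(1,33), (3,28), (4,1)], [(1,4), (2,5), (3,24)], [(2,0), (4,29), (7,10)], [(0,13), (5,13), (7,33)], [(3,17), (5,20), (6,19)], [(1,14), (2,31), (4,33)], [(0,6), (5,9), (6,32)]],
    [[(1,4), (6,27), (7,9)], [(2,32), (3,37), (6,35)], [(1,8), (4,24), (5,35)], [(2,3), (5,33), (7,19)], [(0,32), (3,18), (4,8)], [(0,18), (4,22), (6,13)], [(2,13), (3,14), (5,16)], [(0,34), (1,6), (7,23)]],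
    [[(0,21), (4,4), (7,12)], [(2,4), (4,11), (6,22)], [(0,25), (1,38), (6,23)], [(1,30), (5,27), (7,16)], [(1,31), (5,32), (6,6)], [(3,36), (4,15), (7,29)], [(2,17), (3,31), (5,16)], [(0,2), (2,33), (3,35)]],
    [[(0,9), (6,30), (7,34)], [(2,27), (3,31), (7,6)], [(1,2), (5,37), (6,4)], [(1,24), (2,26), (5,5)], [(2,4), (4,5), (5,27)], [(0,37), (3,21), (4,7)], [(3,26), (4,24), (6,14)], [(0,17), (1,31), (7,23)]],
    [[(3,14), (4,24), (5,27)], [(2,14), (6,7), (7,17)], [(0,32), (3,25), (5,4)], [(2,4), (6,15), (7,28)], [(0,19), (1,7), (4,37)], [(0,30), (1,3), (7,15)], [(1,26), (2,18), (6,5)], [(3,3), (4,14), (5,26)]],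
    [[(2,23), (4,1), (7,22)], [(0,5), (4,12), (6,19)], [(2,22), (3,4), (6,29)], [(0,10), (3,26), (7,2)], [(0,0), (1,0), (5,14)], [(1,29), (4,26), (7,30)], [(1,13), (3,36), (5,16)], [(2,15), (5,0), (6,9)]],
    [[(1,3), (3,21), (7,26)], [(4,10), (6,23), (7,3)], [(0,1), (5,28), (6,28)], [(2,0), (3,20), (4,15)], [(1,22), (4,14), (5,12)], [(0,27), (3,16), (5,26)], [(1,5), (2,4), (7,13)], [(0,35), (2,5), (6,36)]],
    [[(3,0), (4,33), (5,11)], [(4,8), (6,22), (7,6)], [(0,16), (3,37), (6,20)], [(0,18), (6,3), (7,23)], [(1,0), (2,23), (4,34)], [(1,13), (2,6), (7,10)], [(1,32), (2,28), (5,25)], [(0,14), (3,14), (5,0)]],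
    [[(1,15), (3,27), (7,37)], [(2,27), (3,35), (5,27)], [(0,37), (2,37), (5,13)], [(1,11), (4,1), (6,17)], [(1,19), (3,28), (6,9)], [(0,21), (4,23), (7,36)], [(2,20), (4,12), (7,11)], [(0,11), (5,17), (6,10)]],
    [[(0,15), (4,3), (5,11)], [(4,26), (5,10), (7,22)], [(3,28), (6,33), (7,24)], [(0,22), (1,12), (4,13)], [(1,19), (6,31), (7,17)], [(1,8), (2,15), (3,9)], [(2,28), (5,33), (6,29)], [(0,38), (2,17), (3,35)]],
    [[(1,24), (2,1), (5,36)], [(1,13), (3,23), (4,1)], [(5,19), (6,29), (7,29)], [(5,35), (6,18), (7,36)], [(0,12), (2,32), (4,23)], [(0,10), (1,17), (2,36)], [(3,25), (4,30), (7,25)], [(0,11), (3,24), (6,16)]],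
    [[(0,16), (2,15), (7,32)], [(2,37), (3,1), (4,25)], [(1,27), (3,14), (6,18)], [(3,9), (5,15), (6,5)], [(0,26), (1,5), (7,16)], [(4,38), (6,1), (7,30)], [(0,3), (1,28), (5,32)], [(2,8), (4,21), (5,25)]],
    [[(4,14), (5,13), (6,32)], [(0,37), (3,1), (7,10)], [(2,30), (3,3), (6,18)], [(0,15), (2,4), (7,24)], [(1,22), (5,17), (6,19)], [(1,38), (3,29), (4,12)], [(0,17), (1,6), (4,16)], [(2,32), (5,24), (7,32)]],
    [[(1,29), (5,5), (7,5)], [(2,13), (4,22), (6,15)], [(0,29), (1,9), (6,1)], [(4,15), (5,10), (7,31)], [(0,21), (3,12), (6,5)], [(3,16), (4,23), (5,3)], [(0,28), (1,37), (2,26)], [(2,0), (3,29), (7,12)]],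
    [[(0,35), (2,17), (3,3)], [(3,28), (6,5), (7,1)], [(4,12), (5,1), (6,12)], [(1,13), (3,29), (7,17)], [(1,36), (6,22), (7,27)], [(2,7), (4,31), (5,2)], [(0,21), (2,9), (5,3)], [(0,13), (1,29), (4,2)]],
    [[(2,29), (4,34), (5,10)], [(0,12), (3,32), (5,30)], [(0,20), (5,5), (7,37)], [(0,25), (1,26), (6,19)], [(1,7), (3,13), (7,14)], [(2,19), (4,15), (6,3)], [(1,0), (2,18), (7,6)], [(3,6), (4,26), (6,35)]],
    [[(0,12), (5,38), (7,22)], [(2,9), (3,5), (4,2)], [(1,22), (6,5), (7,38)], [(1,24), (3,4), (6,13)], [(3,9), (4,36), (6,12)], [(0,17), (4,10), (5,10)], [(0,13), (1,8), (2,19)], [(2,38), (5,9), (7,36)]],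
    [[(0,3), (2,22), (6,11)], [(2,33), (4,16), (7,2)], [(1,35), (4,24), (5,33)], [(2,29), (3,21), (7,19)], [(0,7), (1,22), (5,5)], [(0,17), (3,13), (7,30)], [(1,15), (3,8), (6,3)], [(4,17), (5,19), (6,1)]],
    [[(1,16), (5,0), (6,37)], [(1,17), (2,4), (3,14)], [(1,9), (4,31), (6,18)], [(0,38), (2,0), (4,18)], [(3,37), (4,17), (7,17)], [(2,23), (5,35), (7,9)], [(0,36), (3,9), (5,4)], [(0,1), (6,26), (7,1)]]]"

definition qs129 :: "(nat \<times> int) list list" where
  "qs129 = [[(0,37), (4,35), (6,33), (7,5)],
    [(1,36), (2,24), (3,1), (5,22)],
    [(0,24), (2,35), (3,23), (4,16)],
    [(0,19), (2,16), (3,33), (4,20)],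
    [(0,6), (1,9), (5,15), (6,3)],
    [(2,16), (5,4), (6,20), (7,13)],
    [(0,6), (4,19), (5,16), (7,20)],
    [(1,24), (2,0), (5,29), (6,20)],
    [(1,24), (3,27), (4,29), (7,14)],
    [(1,15), (3,26), (6,25), (7,34)]]"

definition cls132 :: "(nat \<times> int) list list list" where
  "cls132 = [[[(1,4), (2,10), (3,9)], [(2,17), (4,26), (5,20)], [(0,11), (3,1), (7,4)], [(4,18), (5,30), (6,28)], [(1,5), (6,3), (7,24)], [(1,0), (2,36), (5,4)], [(0,30), (4,25), (7,38)], [(0,34), (3,38), (6,11)]],
    [[(2,29), (5,22), (7,32)], [(0,11), (3,33), (4,13)], [(4,38), (6,35), (7,7)], [(1,0), (3,25), (6,15)], [(1,37), (4,24), (7,24)], [(1,14), (5,6), (6,25)], [(0,30), (2,1), (5,29)], [(0,1), (2,36), (3,14)]],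
    [[(4,21), (5,20), (7,15)], [(2,38), (3,28), (7,20)], [(0,23), (1,7), (4,31)], [(0,15), (5,18), (6,5)], [(0,13), (3,27), (5,4)], [(1,36), (2,16), (6,1)], [(2,27), (6,33), (7,16)], [(1,14), (3,32), (4,5)]],
    [[(2,23), (3,8), (7,38)], [(0,36), (2,30), (5,11)], [(0,16), (3,33), (6,21)], [(1,20), (4,21), (5,16)], [(3,22), (4,4), (7,6)], [(1,22), (6,4), (7,16)], [(2,16), (4,23), (5,0)], [(0,32), (1,33), (6,23)]],
    [[(0,33), (6,5), (7,14)], [(0,5), (2,25), (4,35)], [(3,9), (4,37), (5,20)], [(1,3), (3,5), (7,34)], [(0,28), (1,28), (6,13)], [(1,17), (2,11), (5,15)], [(2,9), (4,30), (7,36)], [(3,16), (5,37), (6,0)]],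
    [[(2,15), (3,6), (5,20)], [(0,33), (1,20), (6,4)], [(0,8), (5,18), (7,8)], [(1,16), (3,7), (4,15)], [(2,20), (6,6), (7,10)], [(0,37), (1,30), (4,37)], [(3,17), (4,20), (5,25)], [(2,31), (6,26), (7,15)]],
    [[(0,1), (3,38), (5,3)], [(1,36), (2,5), (4,2)], [(1,4), (2,21), (3,3)], [(2,10), (6,12), (7,4)], [(5,10), (6,28), (7,30)], [(0,35), (4,7), (7,8)], [(0,24), (1,29), (4,6)], [(3,37), (5,5), (6,26)]],
    [[(1,23), (4,17), (5,1)], [(0,32), (4,3), (7,37)], [(0,1), (5,24), (6,8)], [(3,0), (6,30), (7,20)], [(1,21), (5,35), (7,36)], [(0,18), (2,18), (3,10)], [(1,28), (2,14), (3,8)], [(2,10), (4,1), (6,28)]],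
    [[(5,11), (6,35), (7,13)], [(0,28), (1,9), (7,15)], [(3,5), (4,25), (7,5)], [(0,24), (1,19), (2,15)], [(2,4), (5,4), (6,3)], [(0,8), (4,11), (6,1)], [(1,35), (3,9), (4,18)], [(2,11), (3,37), (5,27)]],
    [[(4,2), (5,9), (6,37)], [(0,31), (3,7), (4,6)], [(1,29), (6,18), (7,14)], [(0,17), (5,34), (6,35)], [(0,15), (2,3), (7,13)], [(1,21), (2,31), (3,14)], [(1,37), (3,21), (4,7)], [(2,32), (5,8), (7,12)]],
    [[(2,28), (5,34), (6,24)], [(2,38), (4,5), (5,9)], [(0,5), (1,34), (5,29)], [(0,25), (1,38), (2,15)], [(3,22), (4,6), (7,21)], [(1,21), (6,28), (7,38)], [(3,9), (4,19), (7,28)], [(0,3), (3,8), (6,17)]],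
    [[(1,11), (2,24), (5,19)], [(3,11), (4,22), (7,27)], [(0,13), (4,29), (7,16)], [(0,5), (3,31), (6,17)], [(0,18), (1,22), (2,10)], [(2,35), (4,36), (6,1)], [(3,33), (5,27), (7,2)], [(1,3), (5,14), (6,30)]],
    [[(0,15), (2,1), (6,23)], [(1,12), (3,7), (5,37)], [(0,29), (1,2), (7,15)], [(2,35), (4,22), (6,6)], [(0,25), (5,2), (7,17)], [(1,10), (2,12), (3,26)], [(3,36), (4,27), (6,34)], [(4,23), (5,12), (7,4)]],
    [[(4,32), (5,7), (6,34)], [(0,1), (2,7), (3,34)], [(2,26), (4,22), (7,25)], [(0,33), (3,35), (5,23)], [(1,14), (6,11), (7,36)], [(1,31), (4,12), (7,26)], [(0,26), (2,30), (6,30)], [(1,12), (3,12), (5,30)]],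
    [[(5,25), (6,22), (7,38)], [(0,31), (4,5), (5,3)], [(1,7), (3,11), (6,3)], [(2,26), (3,10), (7,37)], [(0,8), (1,14), (2,19)], [(3,12), (6,26), (7,33)], [(0,33), (1,15), (4,3)], [(2,21), (4,34), (5,8)]],
    [[(1,22), (2,11), (3,29)], [(2,16), (3,16), (4,32)], [(0,5), (5,3), (7,14)], [(3,18), (5,1), (6,12)], [(1,36), (4,36), (6,35)], [(4,25), (6,10), (7,15)], [(0,34), (1,2), (2,3)], [(0,24), (5,17), (7,1)]],
    [[(4,10), (5,20), (7,26)], [(1,0), (3,21), (4,14)], [(1,13), (2,0), (3,7)], [(1,17), (5,22), (7,10)], [(3,17), (5,3), (7,24)], [(0,11), (4,0), (6,32)], [(0,31), (2,4), (6,12)], [(0,6), (2,38), (6,25)]],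
    [[(0,13), (1,16), (3,36)], [(0,30), (4,8), (6,16)], [(1,36), (2,1), (4,9)], [(1,29), (3,14), (6,21)], [(5,22), (6,14), (7,27)], [(0,14), (5,0), (7,32)], [(2,30), (3,28), (5,38)], [(2,14), (4,19), (7,16)]],
    [[(0,33), (1,25), (3,0)], [(2,35), (5,25), (6,33)], [(2,33), (4,19), (6,5)], [(1,18), (5,3), (7,0)], [(0,16), (3,1), (7,5)], [(3,26), (4,30), (5,38)], [(0,32), (4,17), (7,34)], [(1,32), (2,16), (6,25)]],
    [[(0,31), (3,19), (4,15)], [(1,16), (4,20), (5,37)], [(2,20), (6,34), (7,25)], [(1,23), (5,35), (6,26)], [(0,3), (2,10), (7,17)], [(3,35), (6,15), (7,30)], [(0,2), (2,18), (4,37)], [(1,9), (3,15), (5,0)]],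
    [[(2,11), (3,6), (5,3)], [(0,16), (4,14), (6,17)], [(1,32), (2,30), (7,21)], [(0,30), (4,27), (5,17)], [(1,21), (3,38), (6,4)], [(3,31), (4,10), (6,24)], [(0,35), (1,10), (7,20)], [(2,13), (5,7), (7,10)]],
    [[(0,25), (4,19), (5,34)], [(1,25), (2,28), (7,23)], [(0,14), (2,15), (6,8)], [(0,0), (3,30), (5,6)], [(3,31), (5,23), (6,27)], [(1,30), (4,26), (6,31)], [(2,17), (3,29), (7,0)], [(1,32), (4,27), (7,13)]],
    [[(1,37), (6,14), (7,38)], [(2,34), (3,14), (7,15)], [(1,6), (2,6), (5,7)], [(3,21), (4,35), (6,27)], [(0,12), (1,29), (4,18)], [(3,25), (4,31), (5,18)], [(0,32), (2,17), (5,14)], [(0,31), (6,19), (7,25)]],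
    [[(3,4), (5,3), (7,21)], [(1,5), (3,14), (4,8)], [(2,20), (4,9), (6,21)], [(1,18), (3,6), (4,4)], [(0,29), (2,4), (5,29)], [(2,30), (6,7), (7,7)], [(0,1), (1,31), (7,35)], [(0,30), (5,31), (6,14)]],
    [[(1,8), (2,28), (5,27)], [(0,2), (6,37), (7,31)], [(2,21), (4,16), (6,38)], [(0,34), (1,33), (7,5)], [(0,18), (4,11), (5,7)], [(2,26), (3,19), (5,14)], [(3,5), (4,27), (6,27)], [(1,34), (3,21), (7,36)]],
    [[(0,14), (1,23), (5,6)], [(3,32), (4,20), (6,31)], [(2,13), (4,16), (5,35)], [(1,12), (6,29), (7,17)], [(0,10), (2,8), (6,36)], [(0,15), (3,33), (5,22)], [(1,13), (3,16), (7,25)], [(2,30), (4,9), (7,30)]],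
    [[(3,34), (4,10), (6,19)], [(0,14), (2,3), (6,6)], [(1,13), (4,26), (5,19)], [(1,32), (2,14), (7,23)], [(2,34), (3,5), (5,8)], [(0,33), (4,12), (6,32)], [(1,33), (5,9), (7,21)], [(0,22), (3,15), (7,13)]],
    [[(4,25), (5,7), (7,24)], [(3,16), (4,6), (7,2)], [(1,3), (2,10), (3,38)], [(0,6), (1,28), (6,3)], [(2,0), (5,24), (6,19)], [(0,23), (5,2), (7,1)], [(0,37), (2,11), (4,38)], [(1,8), (3,0), (6,2)]],
    [[(3,38), (5,16), (6,33)], [(0,27), (2,26), (3,27)], [(0,2), (1,4), (4,6)], [(1,29), (4,1), (5,3)], [(2,33), (4,8), (7,12)], [(0,25), (6,8), (7,22)], [(5,32), (6,37), (7,17)], [(1,24), (2,19), (3,25)]],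
    [[(2,0), (3,5), (7,1)], [(4,4), (5,13), (7,11)], [(0,8), (3,36), (6,8)], [(0,19), (2,2), (4,2)], [(1,1), (2,31), (4,24)], [(1,33), (5,35), (6,6)], [(0,0), (1,11), (3,19)], [(5,6), (6,13), (7,6)]],
    [[(0,5), (2,8), (5,17)], [(2,13), (3,16), (7,27)], [(1,38), (4,35), (6,24)], [(0,18), (3,17), (4,4)], [(1,18), (5,28), (6,28)], [(4,33), (6,20), (7,17)], [(2,18), (5,9), (7,31)], [(0,4), (1,28), (3,0)]],
    [[(0,6), (1,3), (3,18)], [(2,28), (3,32), (7,21)], [(4,12), (5,32), (6,6)], [(0,31), (6,1), (7,19)], [(3,19), (4,11), (6,32)], [(0,17), (5,36), (7,32)], [(1,25), (2,36), (4,1)], [(1,38), (2,14), (5,28)]],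
    [[(1,14), (6,5), (7,13)], [(2,23), (5,19), (7,27)], [(0,17), (1,3), (2,34)], [(0,1), (3,4), (4,28)], [(4,30), (5,21), (6,7)], [(2,30), (4,2), (5,2)], [(0,27), (3,9), (7,11)], [(1,19), (3,29), (6,6)]],
    [[(1,14), (3,26), (7,11)], [(1,3), (4,24), (5,35)], [(0,8), (3,33), (7,30)], [(2,22), (4,7), (6,26)], [(0,22), (3,31), (5,27)], [(0,21), (5,16), (6,36)], [(2,23), (4,38), (7,31)], [(1,37), (2,30), (6,37)]],
    [[(0,10), (1,20), (7,29)], [(0,12), (2,14), (3,22)], [(0,14), (2,1), (6,31)], [(4,18), (5,21), (7,10)], [(2,36), (3,33), (6,30)], [(1,1), (5,8), (7,15)], [(3,23), (4,28), (5,7)], [(1,3), (4,32), (6,23)]],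
    [[(2,18), (4,38), (5,30)], [(1,4), (6,17), (7,4)], [(1,27), (2,2), (6,22)], [(1,35), (5,32), (7,12)], [(0,25), (3,33), (4,1)], [(0,33), (3,10), (5,16)], [(0,17), (2,1), (6,30)], [(3,26), (4,27), (7,38)]],
    [[(3,27), (4,27), (7,10)], [(0,4), (1,20), (6,38)], [(0,0), (2,19), (4,31)], [(1,7), (5,23), (6,16)], [(2,33), (5,13), (7,0)], [(3,13), (4,8), (7,26)], [(0,14), (1,33), (2,23)], [(3,8), (5,9), (6,12)]],
    [[(1,10), (2,32), (3,8)], [(1,38), (5,25), (7,2)], [(3,33), (5,14), (6,20)], [(0,32), (4,19), (7,4)], [(4,14), (6,9), (7,12)], [(0,31), (2,28), (4,30)], [(0,33), (1,27), (5,27)], [(2,3), (3,16), (6,16)]],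
    [[(0,11), (1,9), (7,17)], [(2,28), (4,20), (5,26)], [(0,28), (2,33), (3,29)], [(0,18), (6,24), (7,25)], [(1,14), (3,36), (4,33)], [(4,13), (5,10), (6,19)], [(1,25), (5,24), (7,15)], [(2,17), (3,37), (6,38)]],
    [[(1,28), (4,21), (5,9)], [(0,11), (2,29), (5,7)], [(0,0), (1,27), (4,5)], [(3,4), (5,23), (7,9)], [(2,12), (4,10), (6,27)], [(1,14), (3,11), (6,19)], [(0,19), (3,0), (7,32)], [(2,25), (6,17), (7,37)]],
    [[(2,33), (3,3), (6,6)], [(0,8), (3,5), (5,5)], [(0,21), (1,29), (7,25)], [(2,25), (5,27), (7,21)], [(1,3), (4,13), (6,11)], [(3,34), (4,12), (6,13)], [(0,1), (1,19), (5,28)], [(2,29), (4,23), (7,14)]],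
    [[(0,32), (6,30), (7,14)], [(1,31), (2,1), (4,23)], [(0,18), (1,33), (5,22)], [(0,10), (3,17), (4,30)], [(3,24), (5,33), (7,3)], [(1,11), (5,38), (6,13)], [(2,35), (4,19), (6,32)], [(2,33), (3,19), (7,25)]],
    [[(4,0), (6,15), (7,10)], [(1,31), (5,15), (6,11)], [(1,33), (3,23), (7,17)], [(0,28), (2,10), (7,27)], [(0,36), (3,31), (5,5)], [(3,6), (5,4), (6,16)], [(0,11), (2,6), (4,23)], [(1,14), (2,32), (4,22)]],
    [[(3,17), (6,32), (7,31)], [(1,23), (4,29), (7,2)], [(1,36), (2,21), (5,0)], [(0,9), (4,28), (5,29)], [(0,22), (4,12), (5,37)], [(2,35), (3,7), (7,33)], [(0,11), (1,7), (6,13)], [(2,19), (3,21), (6,3)]]]"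

definition qs132 :: "(nat \<times> int) list list" where
  "qs132 = [[(0,35), (1,24), (4,3), (7,31)],
    [(0,15), (2,30), (6,18), (7,16)],
    [(3,3), (4,5), (5,29), (6,23)],
    [(1,1), (2,0), (4,38), (7,26)],
    [(0,33), (3,5), (5,7), (6,22)],
    [(1,4), (2,16), (3,32), (5,37)]]"


lemma chk120: "check cls120 qs120" by code_simp

lemma len120: "length cls120 = 40" by code_simp

lemma chk123: "check cls123 qs123" by code_simp

lemma len123: "length cls123 = 41" by code_simp

lemma chk126: "check cls126 qs126" by code_simp

lemma len126: "length cls126 = 42" by code_simp

lemma chk129: "check cls129 qs129" by code_simp

lemma len129: "length cls129 = 43" by code_simp

lemma chk132: "check cls132 qs132" by code_simp

lemma len132: "length cls132 = 44" by code_simp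

theorem lemma2p2:
  shows "\<forall>m \<in> {120, 123, 126, 129, 132::nat}.
           has_4GDD_of_type (replicate_mset 8 39 + {#m#})"
proof -
  have h120: "has_4GDD_of_type (replicate_mset 8 39 + {#120#})" using final[OF chk120] len120 by simp
  have h123: "has_4GDD_of_type (replicate_mset 8 39 + {#123#})" using final[OF chk123] len123 by simp
  have h126: "has_4GDD_of_type (replicate_mset 8 39 + {#126#})" using final[OF chk126] len126 by simp
  have h129: "has_4GDD_of_type (replicate_mset 8 39 + {#129#})" using final[OF chk129] len129 by simp
  have h132: "has_4GDD_of_type (replicate_mset 8 39 + {#132#})" using final[OF chk132] len132 by simp
  show ?thesis using h120 h123 h126 h129 h132 by simp
qed

end
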